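(* Let $\rho$ be a probability measure on $\mathbb R$ with $\int\log(1+x^2)\rho(\mathrm dx)<+\infty$. For each $N\ge1$ let $a_1^{(N)}<\dots<a_N^{(N)}$ be real numbers and $\rho_N=\frac1N\sum_{j=1}^N\delta_{a_j^{(N)}}$, and assume there exists $\eta\in(0,1)$ with $d_{W_\eta}(\rho_N,\rho)\to0$ as $N\to\infty$. Let $(\beta_N)$ be positive with $\beta_N=o(1/N)$, i.e. $c_N:=N\beta_N/2\to0^+$. Let $\rho_N^{(c_N)}$ be the law of the random mean of the Dirichlet process $D_{c_N\rho_N}$. Then $\rho_N^{(c_N)}\to\rho$ weakly as $N\to\infty$.
   Context: For $0<\eta<1$, $d_{W_\eta}(\mu,\nu)=\sup_{h\in\mathcal H_\eta}|\int h\,\mathrm d\mu-\int h\,\mathrm d\nu|$ where $\mathcal H_\eta$ is the set of $h:\mathbb R\to\mathbb R$ with $|h(x)-h(y)|\le\min\{|x-y|,|x-y|^\eta\}$ for all $x,y$. Dirichlet process: for a probability measure $\mu$ and $c>0$, $D_{c\mu}$ is the random probability measure such that for every finite measurable partition $A_1,\dots,A_k$ of $\mathbb R$, $(D_{c\mu}(A_1),\dots,D_{c\mu}(A_k))\sim\mathrm{Dir}_{(c\mu(A_1),\dots,c\mu(A_k))}$; its random mean is $\int x\,D_{c\mu}(\mathrm dx)$. *)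

theory Defs
  imports "HOL-Probability.Probability"
begin

definition gamma_density :: "real \<Rightarrow> real \<Rightarrow> real" where
  "gamma_density a x = (if x > 0 then x powr (a - 1) * exp (- x) / Gamma a else 0)"

definition gamma_measure :: "real \<Rightarrow> real measure" where
  "gamma_measure a = (if a > 0 then density lborel (\<lambda>x. ennreal (gamma_density a x))
                      else return borel 0)"

(* Dirichlet distribution Dir_(alpha 0, ..., alpha (k-1)) on vectors indexed by {..<k}:
   law of (G_i / sum_j G_j)_i with G_i independent Gamma(alpha i, 1)
   (components with alpha i = 0 are identically 0). *)
definition dirichlet :: "nat \<Rightarrow> (nat \<Rightarrow> real) \<Rightarrow> (nat \<Rightarrow> real) measure" where
  "dirichlet k \<alpha> =
     distr (PiM {..<k} (\<lambda>i. gamma_measure (\<alpha> i))) (PiM {..<k} (\<lambda>_. borel))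
       (\<lambda>g. restrict (\<lambda>i. g i / (\<Sum>j<k. g j)) {..<k})"

definition dirichlet_process ::
  "'a measure \<Rightarrow> ('a \<Rightarrow> real measure) \<Rightarrow> real \<Rightarrow> real measure \<Rightarrow> bool" where
  "dirichlet_process M D c \<mu> \<longleftrightarrow>
     prob_space M \<and> D \<in> measurable M (subprob_algebra borel) \<and>
     (\<forall>\<omega>\<in>space M. prob_space (D \<omega>)) \<and>
     (\<forall>k (A :: nat \<Rightarrow> real set).
        (\<forall>i<k. A i \<in> sets borel) \<and> disjoint_family_on A {..<k} \<and> (\<Union>i<k. A i) = UNIV \<longrightarrow>
        distr M (PiM {..<k} (\<lambda>_. borel)) (\<lambda>\<omega>. restrict (\<lambda>i. measure (D \<omega>) (A i)) {..<k})
          = dirichlet k (\<lambda>i. c * measure \<mu> (A i)))"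

definition random_mean_law :: "'a measure \<Rightarrow> ('a \<Rightarrow> real measure) \<Rightarrow> real measure" where
  "random_mean_law M D = distr M borel (\<lambda>\<omega>. \<integral>x. x \<partial>(D \<omega>))"

definition H_eta :: "real \<Rightarrow> (real \<Rightarrow> real) set" where
  "H_eta \<eta> = {h. \<forall>x y. \<bar>h x - h y\<bar> \<le> min \<bar>x - y\<bar> (\<bar>x - y\<bar> powr \<eta>)}"

definition dW :: "real \<Rightarrow> real measure \<Rightarrow> real measure \<Rightarrow> ereal" where
  "dW \<eta> \<mu> \<nu> = (if \<forall>h\<in>H_eta \<eta>. integrable \<mu> h \<and> integrable \<nu> h
                 then (SUP h\<in>H_eta \<eta>. ereal \<bar>(\<integral>x. h x \<partial>\<mu>) - (\<integral>x. h x \<partial>\<nu>)\<bar>)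
                 else \<infinity>)"

definition empirical :: "nat \<Rightarrow> (nat \<Rightarrow> real) \<Rightarrow> real measure" where
  "empirical N a = distr (measure_pmf (pmf_of_set {1..N})) borel a"

end

theory Submission
  imports Defs
begin


lemma GI:
  assumes s: "s > 0" and l: "l > (0::real)"
  shows "(\<integral>\<^sup>+y. ennreal (indicator {0<..} y * y powr (s-1) * exp (-(l*y))) \<partial>lborel)
        = ennreal (Gamma s / l powr s)"
proof -
  let ?F = "\<lambda>t::real. ennreal (indicator {0..} t * t powr (s - 1) / exp t)"
  have "ennreal (Gamma s) = (\<integral>\<^sup>+t. ?F t \<partial>lborel)"
    using Gamma_conv_nn_integral_real[OF s] by simp
  also have "\<dots> = ennreal l * (\<integral>\<^sup>+x. ?F (0 + l * x) \<partial>lborel)"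
    using l by (subst nn_integral_real_affine[of _ l 0]) auto
  also have "(\<integral>\<^sup>+x. ?F (0 + l * x) \<partial>lborel) =
     (\<integral>\<^sup>+x. ennreal (l powr (s-1)) * ennreal (indicator {0<..} x * x powr (s-1) * exp (-(l*x))) \<partial>lborel)"
  proof (intro nn_integral_cong)
    fix x :: real
    show "?F (0 + l * x) = ennreal (l powr (s-1)) * ennreal (indicator {0<..} x * x powr (s-1) * exp (-(l*x)))"
    proof (cases "x > 0")
      case True
      then show ?thesis using l
        by (simp add: ennreal_mult'[symmetric] powr_mult exp_minus field_simps indicator_def)
    next
      case False
      then show ?thesis using l
        by (auto simp: indicator_def zero_le_mult_iff)
    qed
  qed
  also have "\<dots> = ennreal (l powr (s-1)) * (\<integral>\<^sup>+x. ennreal (indicator {0<..} x * x powr (s-1) * exp (-(l*x))) \<partial>lborel)"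
    by (subst nn_integral_cmult) auto
  finally have eq: "ennreal (Gamma s) = ennreal (l * l powr (s-1)) * (\<integral>\<^sup>+x. ennreal (indicator {0<..} x * x powr (s-1) * exp (-(l*x))) \<partial>lborel)"
    using l by (simp add: ennreal_mult' mult.assoc)
  have ll: "l * l powr (s-1) = l powr s" using l by (simp add: powr_diff)
  have pos: "l powr s > 0" using l by simp
  define I where "I = (\<integral>\<^sup>+x. ennreal (indicator {0<..} x * x powr (s-1) * exp (-(l*x))) \<partial>lborel)"
  have "I = ennreal (l powr s) * I / ennreal (l powr s)"
    using pos by (simp add: ennreal_mult_divide_eq mult.commute)
  also have "\<dots> = ennreal (Gamma s) / ennreal (l powr s)"
    using eq unfolding ll I_def by simp
  also have "\<dots> = ennreal (Gamma s / l powr s)"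
    using pos Gamma_real_pos[OF s] by (simp add: divide_ennreal)
  finally show ?thesis unfolding I_def .
qed


lemma tbound:
  assumes r: "r > 0" and d: "d > (0::real)"
  shows "(\<integral>\<^sup>+t. ennreal (indicator {0<..} t * t powr (r-1) * (1+t) powr (-(d+r))) \<partial>lborel) \<le> ennreal (1/r + 1/d)"
proof -
  have "(\<integral>\<^sup>+t. ennreal (indicator {0<..} t * t powr (r-1) * (1+t) powr (-(d+r))) \<partial>lborel)
     \<le> (\<integral>\<^sup>+t. ennreal (t powr (r-1)) * indicator {0..1} t + ennreal (t powr (-d-1)) * indicator {1..} t \<partial>lborel)"
  proof (intro nn_integral_mono)
    fix t :: real
    show "ennreal (indicator {0<..} t * t powr (r-1) * (1+t) powr (-(d+r))) \<le> ennreal (t powr (r-1)) * indicator {0..1} t + ennreal (t powr (-d-1)) * indicator {1..} t"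
    proof (cases "t \<le> 0")
      case True then show ?thesis by (simp add: indicator_def)
    next
      case False
      show ?thesis
      proof (cases "t \<le> 1")
        case True
        have "(1+t) powr (-(d+r)) \<le> 1" using False d r powr_mono2'[of "-(d+r)" 1 "1+t"] by simp
        then have "t powr (r-1) * (1+t) powr (-(d+r)) \<le> t powr (r-1)"
          by (intro mult_left_le) auto
        then show ?thesis using False True
          by (simp add: indicator_def add_increasing2)
      next
        case f2: False
        have "(1+t) powr (-(d+r)) \<le> t powr (-(d+r))" using f2 d r by (intro powr_mono2') auto
        then have "t powr (r-1) * (1+t) powr (-(d+r)) \<le> t powr (r-1) * t powr (-(d+r))"
          by (intro mult_left_mono) auto
        also have "\<dots> = t powr (-d-1)" using f2 by (simp add: powr_add[symmetric]) (metis add.commute diff_conv_add_uminus)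
        finally show ?thesis using f2 False
          by (simp add: indicator_def)
      qed
    qed
  qed
  also have "\<dots> = (\<integral>\<^sup>+t. ennreal (t powr (r-1)) * indicator {0..1} t \<partial>lborel) + (\<integral>\<^sup>+t. ennreal (t powr (-d-1)) * indicator {1..} t \<partial>lborel)"
    by (intro nn_integral_add) auto
  also have "(\<integral>\<^sup>+t. ennreal (t powr (r-1)) * indicator {0..1} t \<partial>lborel) = ennreal (1/r)"
    using has_integral_powr_from_0[of "r-1" 1] r
    by (intro nn_integral_has_integral_lebesgue') auto
  also have "(\<integral>\<^sup>+t. ennreal (t powr (-d-1)) * indicator {1..} t \<partial>lborel) = ennreal (1/d)"
    using has_integral_powr_to_inf[of "-d-1" 1] d
    by (intro nn_integral_has_integral_lebesgue') auto
  finally show ?thesis using r d by (simp add: ennreal_plus[symmetric] del: ennreal_plus)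
qed


lemma gamma_density_measurable[measurable]: "gamma_density a \<in> borel_measurable borel"
  unfolding gamma_density_def by measurable

lemma GIc:
  assumes s: "s > 0" and l: "l > (0::real)" and C: "C \<ge> 0"
  shows "(\<integral>\<^sup>+y. ennreal (C * (indicator {0<..} y * y powr (s-1) * exp (-(l*y)))) \<partial>lborel)
        = ennreal (C * Gamma s / l powr s)"
proof -
  have "(\<integral>\<^sup>+y. ennreal (C * (indicator {0<..} y * y powr (s-1) * exp (-(l*y)))) \<partial>lborel)
     = (\<integral>\<^sup>+y. ennreal C * ennreal (indicator {0<..} y * y powr (s-1) * exp (-(l*y))) \<partial>lborel)"
    using C by (intro nn_integral_cong) (simp add: ennreal_mult)
  also have "\<dots> = ennreal C * ennreal (Gamma s / l powr s)"
    by (subst nn_integral_cmult) (auto simp: GI[OF s l])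
  finally show ?thesis using C s l Gamma_real_pos[OF s] by (simp add: ennreal_mult[symmetric])
qed

lemma G2:
  fixes a b p q :: real
  assumes a: "a > 0" and b: "b > 0" and p: "p \<ge> 0" and q: "q \<ge> 0" and r: "p + q > 0"
  shows "(\<integral>\<^sup>+x. \<integral>\<^sup>+y. ennreal (gamma_density a x * gamma_density b y * (x powr p * y powr q / (x+y) powr (p+q))) \<partial>lborel \<partial>lborel)
    \<le> ennreal (Gamma (a+p) * Gamma (b+q) / (Gamma a * Gamma b * Gamma (p+q)) * (1/(p+q) + 1/(a+b)))"
proof -
  define rr where "rr = p + q"
  have rr: "rr > 0" using r rr_def by simp
  define X where "X x = indicator {0<..} x * x powr (a+p-1) * exp (-x) / Gamma a" for x :: real
  define Y where "Y y = indicator {0<..} y * y powr (b+q-1) * exp (-y) / Gamma b" for y :: real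
  have Ga: "Gamma a > 0" and Gb: "Gamma b > 0" and Gr: "Gamma rr > 0"
    using a b rr by (simp_all add: Gamma_real_pos)
  have X0: "X x \<ge> 0" for x using Ga by (simp add: X_def indicator_def)
  have Y0: "Y y \<ge> 0" for y using Gb by (simp add: Y_def indicator_def)
  define F where "F x y t = ennreal (X x * Y y / Gamma rr * (indicator {0<..} t * t powr (rr-1) * exp (-((x+y)*t))))" for x y t :: real
  have step0: "ennreal (gamma_density a x * gamma_density b y * (x powr p * y powr q / (x+y) powr rr)) = (\<integral>\<^sup>+t. F x y t \<partial>lborel)" for x y
  proof (cases "x > 0 \<and> y > 0")
    case True
    have "(\<integral>\<^sup>+t. F x y t \<partial>lborel) = ennreal (X x * Y y / Gamma rr * Gamma rr / (x+y) powr rr)"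
      unfolding F_def using True X0 Y0 Gr by (intro GIc rr) auto
    also have "X x * Y y / Gamma rr * Gamma rr / (x+y) powr rr = gamma_density a x * gamma_density b y * (x powr p * y powr q / (x+y) powr rr)"
      using True Gr unfolding X_def Y_def gamma_density_def
      by (simp add: powr_add powr_diff field_simps)
    finally show ?thesis by simp
  next
    case False
    then show ?thesis
      by (auto simp: F_def X_def Y_def gamma_density_def)
  qed
  have "(\<integral>\<^sup>+x. \<integral>\<^sup>+y. ennreal (gamma_density a x * gamma_density b y * (x powr p * y powr q / (x+y) powr (p+q))) \<partial>lborel \<partial>lborel)
     = (\<integral>\<^sup>+x. \<integral>\<^sup>+y. \<integral>\<^sup>+t. F x y t \<partial>lborel \<partial>lborel \<partial>lborel)"
    using step0 unfolding rr_def by simp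
  also have "\<dots> = (\<integral>\<^sup>+x. \<integral>\<^sup>+t. \<integral>\<^sup>+y. F x y t \<partial>lborel \<partial>lborel \<partial>lborel)"
  proof (rule nn_integral_cong)
    fix x
    show "(\<integral>\<^sup>+y. \<integral>\<^sup>+t. F x y t \<partial>lborel \<partial>lborel) = (\<integral>\<^sup>+t. \<integral>\<^sup>+y. F x y t \<partial>lborel \<partial>lborel)"
      using lborel_pair.Fubini'[where f="\<lambda>y t. F x y t"]
      unfolding F_def X_def Y_def by simp
  qed
  also have "\<dots> = (\<integral>\<^sup>+x. \<integral>\<^sup>+t. ennreal (X x * indicator {0<..} t * t powr (rr-1) * exp (-(t*x)) / Gamma rr * (Gamma (b+q) / (Gamma b * (1+t) powr (b+q)))) \<partial>lborel \<partial>lborel)"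
  proof (intro nn_integral_cong)
    fix x t :: real
    show "(\<integral>\<^sup>+y. F x y t \<partial>lborel) = ennreal (X x * indicator {0<..} t * t powr (rr-1) * exp (-(t*x)) / Gamma rr * (Gamma (b+q) / (Gamma b * (1+t) powr (b+q))))"
    proof (cases "t > 0")
      case True
      define C where "C = X x * indicator {0<..} t * t powr (rr-1) * exp (-(t*x)) / Gamma rr / Gamma b"
      have C0: "C \<ge> 0" unfolding C_def using X0[of x] Gr Gb by (auto simp: indicator_def)
      have "(\<integral>\<^sup>+y. F x y t \<partial>lborel) = (\<integral>\<^sup>+y. ennreal (C * (indicator {0<..} y * y powr (b+q-1) * exp (-((1+t)*y)))) \<partial>lborel)"
        unfolding F_def C_def Y_def
        by (intro nn_integral_cong) (auto simp: indicator_def exp_diff exp_minus exp_add field_simps)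
      also have "\<dots> = ennreal (C * Gamma (b+q) / (1+t) powr (b+q))"
        using True b q C0 by (intro GIc) auto
      finally show ?thesis unfolding C_def by (simp add: field_simps)
    next
      case False
      then show ?thesis by (simp add: F_def)
    qed
  qed
  also have "\<dots> = (\<integral>\<^sup>+t. \<integral>\<^sup>+x. ennreal (X x * indicator {0<..} t * t powr (rr-1) * exp (-(t*x)) / Gamma rr * (Gamma (b+q) / (Gamma b * (1+t) powr (b+q)))) \<partial>lborel \<partial>lborel)"
    using lborel_pair.Fubini'[where f="\<lambda>x t. ennreal (X x * indicator {0<..} t * t powr (rr-1) * exp (-(t*x)) / Gamma rr * (Gamma (b+q) / (Gamma b * (1+t) powr (b+q))))"]
    unfolding X_def by simp
  also have "\<dots> = (\<integral>\<^sup>+t. ennreal (Gamma (a+p) * Gamma (b+q) / (Gamma a * Gamma b * Gamma rr)) * ennreal (indicator {0<..} t * t powr (rr-1) * (1+t) powr (-((a+b)+rr))) \<partial>lborel)"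
  proof (intro nn_integral_cong)
    fix t :: real
    show "(\<integral>\<^sup>+x. ennreal (X x * indicator {0<..} t * t powr (rr-1) * exp (-(t*x)) / Gamma rr * (Gamma (b+q) / (Gamma b * (1+t) powr (b+q)))) \<partial>lborel)
       = ennreal (Gamma (a+p) * Gamma (b+q) / (Gamma a * Gamma b * Gamma rr)) * ennreal (indicator {0<..} t * t powr (rr-1) * (1+t) powr (-((a+b)+rr)))"
    proof (cases "t > 0")
      case True
      define C where "C = t powr (rr-1) / Gamma rr * (Gamma (b+q) / (Gamma b * (1+t) powr (b+q))) / Gamma a"
      have C0: "C \<ge> 0" unfolding C_def using Ga Gr Gb Gamma_real_pos[of "b+q"] b q True by auto
      have "(\<integral>\<^sup>+x. ennreal (X x * indicator {0<..} t * t powr (rr-1) * exp (-(t*x)) / Gamma rr * (Gamma (b+q) / (Gamma b * (1+t) powr (b+q)))) \<partial>lborel)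
         = (\<integral>\<^sup>+x. ennreal (C * (indicator {0<..} x * x powr (a+p-1) * exp (-((1+t)*x)))) \<partial>lborel)"
        unfolding C_def X_def using True
        by (intro nn_integral_cong) (auto simp: indicator_def exp_diff exp_minus exp_add field_simps)
      also have "\<dots> = ennreal (C * Gamma (a+p) / (1+t) powr (a+p))"
        using True a p C0 by (intro GIc) auto
      also have "C * Gamma (a+p) / (1+t) powr (a+p) = Gamma (a+p) * Gamma (b+q) / (Gamma a * Gamma b * Gamma rr) * (indicator {0<..} t * t powr (rr-1) * (1+t) powr (-((a+b)+rr)))"
        unfolding C_def using True Ga Gb Gr rr_def
        by (simp add: powr_minus powr_add[symmetric] field_simps)
      finally show ?thesis
        using C0 True Ga Gb Gr Gamma_real_pos[of "b+q"] Gamma_real_pos[of "a+p"] a b p q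
        by (simp add: ennreal_mult[symmetric])
    next
      case False
      then show ?thesis by simp
    qed
  qed
  also have "\<dots> = ennreal (Gamma (a+p) * Gamma (b+q) / (Gamma a * Gamma b * Gamma rr)) * (\<integral>\<^sup>+t. ennreal (indicator {0<..} t * t powr (rr-1) * (1+t) powr (-((a+b)+rr))) \<partial>lborel)"
    by (rule nn_integral_cmult) simp
  also have "\<dots> \<le> ennreal (Gamma (a+p) * Gamma (b+q) / (Gamma a * Gamma b * Gamma rr)) * ennreal (1/rr + 1/(a+b))"
    by (intro mult_left_mono tbound rr) (use a b in auto)
  also have "\<dots> = ennreal (Gamma (a+p) * Gamma (b+q) / (Gamma a * Gamma b * Gamma rr) * (1/rr + 1/(a+b)))"
    by (rule ennreal_mult'[symmetric])
       (use Ga Gb Gr Gamma_real_pos[of "b+q"] Gamma_real_pos[of "a+p"] a b p q in auto)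
  finally show ?thesis unfolding rr_def .
qed


lemma sets_gamma_measure[measurable_cong, simp]: "sets (gamma_measure a) = sets borel"
  by (simp add: gamma_measure_def)

lemma space_gamma_measure[simp]: "space (gamma_measure a) = UNIV"
  using sets_eq_imp_space_eq[OF sets_gamma_measure] by simp

lemma nn_integral_gamma:
  assumes "a > 0" and [measurable]: "f \<in> borel_measurable borel"
  shows "(\<integral>\<^sup>+x. f x \<partial>gamma_measure a) = (\<integral>\<^sup>+x. ennreal (gamma_density a x) * f x \<partial>lborel)"
  using assms by (simp add: gamma_measure_def nn_integral_density)

lemma prob_space_gamma: "prob_space (gamma_measure a)"
proof (cases "a > 0")
  case True
  have Ga: "Gamma a > 0" using True by (simp add: Gamma_real_pos)
  have "emeasure (gamma_measure a) (space (gamma_measure a)) = (\<integral>\<^sup>+x. ennreal (gamma_density a x) * 1 \<partial>lborel)"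
    using True by (simp add: gamma_measure_def emeasure_density) 
  also have "\<dots> = (\<integral>\<^sup>+x. ennreal ((1 / Gamma a) * (indicator {0<..} x * x powr (a-1) * exp (-(1*x)))) \<partial>lborel)"
    by (intro nn_integral_cong) (auto simp: gamma_density_def indicator_def)
  also have "\<dots> = ennreal (1 / Gamma a * Gamma a / 1 powr a)"
    using True Ga by (intro GIc) auto
  also have "\<dots> = 1" using Ga by simp
  finally show ?thesis by (intro prob_spaceI)
next
  case False
  then show ?thesis by (simp add: gamma_measure_def prob_space_return)
qed

lemma sf_gamma: "sigma_finite_measure (gamma_measure t)"
  using prob_space_gamma prob_space_imp_sigma_finite by blast

lemma measurable_nn_gamma[measurable (raw)]:
  assumes "case_prod f \<in> borel_measurable (N \<Otimes>\<^sub>M borel)"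
  shows "(\<lambda>x. \<integral>\<^sup>+y. f x y \<partial>gamma_measure t) \<in> borel_measurable N"
proof (rule sigma_finite_measure.borel_measurable_nn_integral[OF sf_gamma])
  have "sets (N \<Otimes>\<^sub>M gamma_measure t) = sets (N \<Otimes>\<^sub>M borel)"
    by (intro sets_pair_measure_cong) auto
  then show "case_prod f \<in> borel_measurable (N \<Otimes>\<^sub>M gamma_measure t)"
    using assms by (simp add: measurable_def space_pair_measure)
qed

lemma PiM2_nn:
  fixes f :: "real \<Rightarrow> real \<Rightarrow> ennreal"
  assumes [measurable]: "case_prod f \<in> borel_measurable (borel \<Otimes>\<^sub>M borel)"
  shows "(\<integral>\<^sup>+g. f (g 0) (g 1) \<partial>PiM {..<2::nat} (\<lambda>i. gamma_measure (\<alpha> i)))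
       = (\<integral>\<^sup>+x. \<integral>\<^sup>+y. f x y \<partial>gamma_measure (\<alpha> 1) \<partial>gamma_measure (\<alpha> 0))"
proof -
  interpret product_sigma_finite "\<lambda>i. gamma_measure (\<alpha> i)"
    unfolding product_sigma_finite_def
    using prob_space_gamma prob_space_imp_sigma_finite by blast
  have U: "{..<2::nat} = insert 1 {0}" by auto
  have "(\<integral>\<^sup>+g. f (g 0) (g 1) \<partial>PiM {..<2::nat} (\<lambda>i. gamma_measure (\<alpha> i)))
     = (\<integral>\<^sup>+x. (\<integral>\<^sup>+y. f ((x(1:=y)) 0) ((x(1:=y)) 1) \<partial>gamma_measure (\<alpha> 1)) \<partial>PiM {0} (\<lambda>i. gamma_measure (\<alpha> i)))"
    unfolding U by (rule product_nn_integral_insert) auto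
  also have "\<dots> = (\<integral>\<^sup>+x. (\<lambda>z. \<integral>\<^sup>+y. f z y \<partial>gamma_measure (\<alpha> 1)) (x 0) \<partial>PiM {0} (\<lambda>i. gamma_measure (\<alpha> i)))"
    by simp
  also have "\<dots> = (\<integral>\<^sup>+z. \<integral>\<^sup>+y. f z y \<partial>gamma_measure (\<alpha> 1) \<partial>gamma_measure (\<alpha> 0))"
    by (rule product_nn_integral_singleton) measurable
  finally show ?thesis .
qed


lemma gamma_density_nonneg: "a > 0 \<Longrightarrow> gamma_density a x \<ge> 0"
  by (simp add: gamma_density_def Gamma_real_pos)

lemma Beta_gen:
  fixes f :: "real \<Rightarrow> ennreal"
  assumes a: "\<alpha> 0 > 0" and b: "\<alpha> 1 > 0" and p: "p \<ge> 0" and q: "q \<ge> 0" and r: "p + q > 0"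
    and [measurable]: "f \<in> borel_measurable borel"
    and fe: "\<And>x y. x > 0 \<Longrightarrow> y > 0 \<Longrightarrow> f (x / (x+y)) = ennreal (x powr p * y powr q / (x+y) powr (p+q))"
  shows "(\<integral>\<^sup>+g. f (g 0 / (\<Sum>j<2. g j)) \<partial>PiM {..<2::nat} (\<lambda>i. gamma_measure (\<alpha> i)))
     \<le> ennreal (Gamma (\<alpha> 0+p) * Gamma (\<alpha> 1+q) / (Gamma (\<alpha> 0) * Gamma (\<alpha> 1) * Gamma (p+q)) * (1/(p+q) + 1/(\<alpha> 0+\<alpha> 1)))"
proof -
  have s2: "(\<Sum>j<2. g j) = g 0 + g (1::nat)" for g :: "nat \<Rightarrow> real"
    by (simp add: numeral_2_eq_2)
  have "(\<integral>\<^sup>+g. f (g 0 / (\<Sum>j<2. g j)) \<partial>PiM {..<2::nat} (\<lambda>i. gamma_measure (\<alpha> i)))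
      = (\<integral>\<^sup>+g. (\<lambda>x y. f (x / (x + y))) (g 0) (g 1) \<partial>PiM {..<2::nat} (\<lambda>i. gamma_measure (\<alpha> i)))"
    by (simp add: s2)
  also have "\<dots> = (\<integral>\<^sup>+x. \<integral>\<^sup>+y. f (x / (x + y)) \<partial>gamma_measure (\<alpha> 1) \<partial>gamma_measure (\<alpha> 0))"
    by (rule PiM2_nn) measurable
  also have "\<dots> = (\<integral>\<^sup>+x. ennreal (gamma_density (\<alpha> 0) x) * (\<integral>\<^sup>+y. ennreal (gamma_density (\<alpha> 1) y) * f (x / (x + y)) \<partial>lborel) \<partial>lborel)"
    using a b by (subst nn_integral_gamma) (auto intro!: nn_integral_cong simp: nn_integral_gamma)
  also have "\<dots> = (\<integral>\<^sup>+x. \<integral>\<^sup>+y. ennreal (gamma_density (\<alpha> 0) x) * (ennreal (gamma_density (\<alpha> 1) y) * f (x / (x + y))) \<partial>lborel \<partial>lborel)"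
    by (intro nn_integral_cong nn_integral_cmult[symmetric]) measurable
  also have "\<dots> = (\<integral>\<^sup>+x. \<integral>\<^sup>+y. ennreal (gamma_density (\<alpha> 0) x * gamma_density (\<alpha> 1) y * (x powr p * y powr q / (x+y) powr (p+q))) \<partial>lborel \<partial>lborel)"
  proof (intro nn_integral_cong)
    fix x y :: real
    show "ennreal (gamma_density (\<alpha> 0) x) * (ennreal (gamma_density (\<alpha> 1) y) * f (x / (x + y))) =
          ennreal (gamma_density (\<alpha> 0) x * gamma_density (\<alpha> 1) y * (x powr p * y powr q / (x+y) powr (p+q)))"
    proof (cases "x > 0 \<and> y > 0")
      case True
      then show ?thesis using fe[of x y] gamma_density_nonneg[OF a, of x] gamma_density_nonneg[OF b, of y]
        by (simp add: ennreal_mult[symmetric] mult.assoc)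
    next
      case False
      then show ?thesis by (auto simp: gamma_density_def)
    qed
  qed
  also have "\<dots> \<le> ennreal (Gamma (\<alpha> 0+p) * Gamma (\<alpha> 1+q) / (Gamma (\<alpha> 0) * Gamma (\<alpha> 1) * Gamma (p+q)) * (1/(p+q) + 1/(\<alpha> 0+\<alpha> 1)))"
    by (rule G2) (use a b p q r in auto)
  finally show ?thesis .
qed


lemma dp_two:
  assumes dp: "dirichlet_process M D c \<mu>" and A: "A \<in> sets borel"
    and f[measurable]: "f \<in> borel_measurable borel"
  shows "(\<integral>\<^sup>+\<omega>. f (measure (D \<omega>) A) \<partial>M)
       = (\<integral>\<^sup>+g. f (g 0 / (\<Sum>j<2. g j)) \<partial>PiM {..<2::nat} (\<lambda>i. gamma_measure (c * measure \<mu> (if i = 0 then A else -A))))"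
proof -
  define A' where "A' = (\<lambda>i::nat. if i = 0 then A else -A)"
  have Dm[measurable]: "D \<in> measurable M (subprob_algebra borel)" using dp by (simp add: dirichlet_process_def)
  have A'm: "A' i \<in> sets borel" for i using A by (simp add: A'_def)
  have disj: "disjoint_family_on A' {..<2}"
    unfolding disjoint_family_on_def A'_def by (auto simp: numeral_2_eq_2)
  have un: "(\<Union>i<2. A' i) = UNIV"
    unfolding A'_def by (auto simp: numeral_2_eq_2)
  have eq: "distr M (PiM {..<2} (\<lambda>_. borel)) (\<lambda>\<omega>. restrict (\<lambda>i. measure (D \<omega>) (A' i)) {..<2})
          = dirichlet 2 (\<lambda>i. c * measure \<mu> (A' i))"
    using dp A'm disj un unfolding dirichlet_process_def by blast
  have Xm: "(\<lambda>\<omega>. restrict (\<lambda>i. measure (D \<omega>) (A' i)) {..<2::nat}) \<in> M \<rightarrow>\<^sub>M PiM {..<2} (\<lambda>_. borel)"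
  proof (rule measurable_restrict)
    fix i :: nat assume "i \<in> {..<2}"
    show "(\<lambda>\<omega>. measure (D \<omega>) (A' i)) \<in> borel_measurable M"
      using A'm[of i] by measurable
  qed
  have Ym: "(\<lambda>g. restrict (\<lambda>i. g i / (\<Sum>j<2. g j)) {..<2::nat}) \<in> PiM {..<2} (\<lambda>i. gamma_measure (c * measure \<mu> (A' i))) \<rightarrow>\<^sub>M PiM {..<2} (\<lambda>_. borel)"
    by measurable
  have "(\<integral>\<^sup>+\<omega>. f (measure (D \<omega>) A) \<partial>M) = (\<integral>\<^sup>+\<omega>. (\<lambda>z. f (z 0)) (restrict (\<lambda>i. measure (D \<omega>) (A' i)) {..<2::nat}) \<partial>M)"
    by (simp add: A'_def)
  also have "\<dots> = (\<integral>\<^sup>+z. f (z 0) \<partial>distr M (PiM {..<2} (\<lambda>_. borel)) (\<lambda>\<omega>. restrict (\<lambda>i. measure (D \<omega>) (A' i)) {..<2}))"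
    by (rule nn_integral_distr[symmetric]) (use Xm in measurable)
  also have "\<dots> = (\<integral>\<^sup>+z. f (z 0) \<partial>dirichlet 2 (\<lambda>i. c * measure \<mu> (A' i)))"
    by (simp add: eq)
  also have "\<dots> = (\<integral>\<^sup>+g. f (restrict (\<lambda>i. g i / (\<Sum>j<2. g j)) {..<2::nat} 0) \<partial>PiM {..<2} (\<lambda>i. gamma_measure (c * measure \<mu> (A' i))))"
    unfolding dirichlet_def by (rule nn_integral_distr) (use Ym in measurable)
  also have "\<dots> = (\<integral>\<^sup>+g. f (g 0 / (\<Sum>j<2. g j)) \<partial>PiM {..<2::nat} (\<lambda>i. gamma_measure (c * measure \<mu> (A' i))))"
    by simp
  finally show ?thesis unfolding A'_def .
qed


locale dpN =
  fixes N :: nat and a :: "nat \<Rightarrow> real" and c :: real and M :: "'a measure" and D :: "'a \<Rightarrow> real measure"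
  assumes N2: "N \<ge> 2" and inj: "inj_on a {1..N}" and cpos: "c > 0"
    and dp: "dirichlet_process M D c (empirical N a)"
begin

abbreviation "\<mu> \<equiv> empirical N a"
definition "S = a ` {1..N}"

lemma finS: "finite S" by (simp add: S_def)

lemma ne: "{1..N} \<noteq> {}" using N2 by auto

lemma a_meas[measurable]: "a \<in> measurable (measure_pmf (pmf_of_set {1..N})) borel"
  by simp

lemma prob_mu: "prob_space \<mu>"
  unfolding empirical_def by (intro prob_space.prob_space_distr) (auto simp: measure_pmf.prob_space_axioms)

lemma sets_mu[simp, measurable_cong]: "sets \<mu> = sets borel"
  by (simp add: empirical_def)

lemma space_mu[simp]: "space \<mu> = UNIV"
  by (simp add: empirical_def)

lemma emp_measure: "B \<in> sets borel \<Longrightarrow> measure \<mu> B = card ({1..N} \<inter> a -` B) / N"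
  unfolding empirical_def using ne
  by (subst measure_distr) (auto simp: measure_pmf_of_set)

lemma emp_singleton: "j \<in> {1..N} \<Longrightarrow> measure \<mu> {a j} = 1 / N"
proof -
  assume j: "j \<in> {1..N}"
  have "{1..N} \<inter> a -` {a j} = {j}" using inj j by (auto dest: inj_onD)
  then show ?thesis by (simp add: emp_measure)
qed

lemma emp_S: "measure \<mu> (-S) = 0"
proof -
  have "{1..N} \<inter> a -` (-S) = {}" by (auto simp: S_def)
  moreover have "-S \<in> sets borel" using finS by (simp add: borel_closed finite_imp_closed)
  ultimately show ?thesis by (simp add: emp_measure)
qed

lemma emp_compl: "B \<in> sets borel \<Longrightarrow> measure \<mu> (-B) = 1 - measure \<mu> B"
proof -
  assume B: "B \<in> sets borel"
  have "-B = space \<mu> - B" by auto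
  then show ?thesis using prob_space.prob_compl[OF prob_mu, of B] B by simp
qed

lemma emp_integral: "f \<in> borel_measurable borel \<Longrightarrow> integral\<^sup>L \<mu> f = (\<Sum>j\<in>{1..N}. f (a j)) / N"
  unfolding empirical_def using ne
  by (subst integral_distr) (auto simp: integral_pmf_of_set)

lemma Dm[measurable]: "D \<in> measurable M (subprob_algebra borel)"
  using dp by (simp add: dirichlet_process_def)

lemma probM: "prob_space M"
  using dp by (simp add: dirichlet_process_def)

lemma probD: "\<omega> \<in> space M \<Longrightarrow> prob_space (D \<omega>)"
  using dp by (simp add: dirichlet_process_def)

lemma setsD: "\<omega> \<in> space M \<Longrightarrow> sets (D \<omega>) = sets borel"
  using subprob_measurableD(2)[OF Dm] by simp

lemma zero_ae: "AE \<omega> in M. measure (D \<omega>) (-S) = 0"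
proof -
  have Sb: "-S \<in> sets borel" using finS by (simp add: borel_closed finite_imp_closed)
  let ?f = "\<lambda>u::real. ennreal (indicator (-{0}) u)"
  have "(\<integral>\<^sup>+\<omega>. ?f (measure (D \<omega>) (-S)) \<partial>M)
     = (\<integral>\<^sup>+g. ?f (g 0 / (\<Sum>j<2. g j)) \<partial>PiM {..<2::nat} (\<lambda>i. gamma_measure (c * measure \<mu> (if i = 0 then -S else - (-S)))))"
    by (rule dp_two[OF dp Sb]) measurable
  also have "\<dots> = (\<integral>\<^sup>+g. (\<lambda>x y. ?f (x / (x + y))) (g 0) (g 1) \<partial>PiM {..<2::nat} (\<lambda>i. gamma_measure (c * measure \<mu> (if i = 0 then -S else - (-S)))))"
    by (simp add: numeral_2_eq_2)
  also have "\<dots> = (\<integral>\<^sup>+x. \<integral>\<^sup>+y. ?f (x / (x + y)) \<partial>gamma_measure (c * measure \<mu> (- (-S))) \<partial>gamma_measure (c * measure \<mu> (-S)))"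
    using PiM2_nn[where \<alpha>="\<lambda>i. c * measure \<mu> (if i = 0 then -S else - (-S))" and f="\<lambda>x y. ?f (x / (x + y))"]
    by (simp add: measurable_split_conv)
  also have "\<dots> = (\<integral>\<^sup>+x. \<integral>\<^sup>+y. ?f (x / (x + y)) \<partial>gamma_measure (c * measure \<mu> (- (-S))) \<partial>return borel 0)"
    by (simp add: emp_S gamma_measure_def)
  also have "\<dots> = (\<integral>\<^sup>+y. ?f (0 / (0 + y)) \<partial>gamma_measure (c * measure \<mu> (- (-S))))"
    by (rule nn_integral_return) measurable
  also have "\<dots> = 0"
    by simp
  finally have "(\<integral>\<^sup>+\<omega>. ?f (measure (D \<omega>) (-S)) \<partial>M) = 0" .
  then have "AE \<omega> in M. ?f (measure (D \<omega>) (-S)) = 0"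
    by (subst (asm) nn_integral_0_iff_AE) (use Sb in measurable)
  then show ?thesis by (auto simp: indicator_def elim: AE_mp)
qed

end


lemma finite_support_prob:
  fixes P :: "real measure"
  assumes P: "prob_space P" and sP: "sets P = sets borel" and S: "finite S" and z: "measure P (-S) = 0"
    and f[measurable]: "f \<in> borel_measurable borel"
  shows "(\<Sum>s\<in>S. measure P {s}) = 1" and "integral\<^sup>L P f = (\<Sum>s\<in>S. f s * measure P {s})"
proof -
  interpret prob_space P by (rule P)
  have sp: "space P = UNIV" using sets_eq_imp_space_eq[OF sP] by simp
  have Sb: "S \<in> sets P" using S sP by (simp add: borel_closed finite_imp_closed)
  have "measure P S = 1 - measure P (-S)"
    using prob_compl[OF Sb] sp by (simp add: Compl_eq_Diff_UNIV)
  also have "measure P S = (\<Sum>s\<in>S. measure P {s})"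
    using S sP by (intro measure_eq_sum_singleton) auto
  finally show "(\<Sum>s\<in>S. measure P {s}) = 1" using z by simp
  have ae: "AE x in P. x \<in> S"
  proof -
    have "-S \<in> sets P" using Sb sp by (metis Compl_eq_Diff_UNIV sets.compl_sets)
    then have "-S \<in> null_sets P" using z by (simp add: null_sets_def emeasure_eq_measure)
    then show ?thesis by (rule AE_I') auto
  qed
  have "integral\<^sup>L P f = integral\<^sup>L P (\<lambda>x. \<Sum>s\<in>S. f s * indicator {s} x)"
  proof (rule integral_cong_AE)
    show "AE x in P. f x = (\<Sum>s\<in>S. f s * indicator {s} x)"
      using ae
    proof (rule AE_mp, intro AE_I2 impI)
      fix x assume "x \<in> S"
      then have "(\<Sum>s\<in>S. f s * indicator {s} x) = (\<Sum>s\<in>{x}. f s * indicator {s} x)"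
        using S by (intro sum.mono_neutral_right) (auto simp: indicator_def)
      then show "f x = (\<Sum>s\<in>S. f s * indicator {s} x)" by simp
    qed
  qed (simp_all add: measurable_cong_sets[OF sP refl])
  also have "\<dots> = (\<Sum>s\<in>S. integral\<^sup>L P (\<lambda>x. f s * indicator {s} x))"
  proof (rule Bochner_Integration.integral_sum)
    fix s
    have "{s} \<in> sets P" using sP by simp
    then have "integrable P (indicator {s} :: real \<Rightarrow> real)"
      by (intro integrable_real_indicator) (auto simp: emeasure_eq_measure)
    then show "integrable P (\<lambda>x. f s * indicator {s} x)" by (rule integrable_mult_right)
  qed
  also have "\<dots> = (\<Sum>s\<in>S. f s * measure P {s})"
    by (intro sum.cong refl, subst integral_mult_right_zero) (simp add: sP)
  finally show "integral\<^sup>L P f = (\<Sum>s\<in>S. f s * measure P {s})" .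
qed


context dpN begin

definition "wt j \<omega> = measure (D \<omega>) {a j}"

lemma wt_meas[measurable]: "wt j \<in> borel_measurable M"
  unfolding wt_def by measurable

lemma wt_01: "\<omega> \<in> space M \<Longrightarrow> 0 \<le> wt j \<omega> \<and> wt j \<omega> \<le> 1"
  unfolding wt_def using prob_space.prob_le_1[OF probD] by auto

definition "al0 = c / N"
definition "al1 = c - c / N"

lemma al_pos: "al0 > 0" "al1 > 0" "al0 + al1 = c" "al0 \<le> c"
proof -
  have "real N \<ge> 2" using N2 by simp
  then have "c / N < c" "c / N > 0" using cpos by (auto simp: field_simps)
  then show "al0 > 0" "al1 > 0" "al0 + al1 = c" "al0 \<le> c" by (auto simp: al0_def al1_def)
qed

lemma w_law:
  assumes j: "j \<in> {1..N}" and f[measurable]: "f \<in> borel_measurable borel"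
  shows "(\<integral>\<^sup>+\<omega>. f (wt j \<omega>) \<partial>M)
       = (\<integral>\<^sup>+g. f (g 0 / (\<Sum>j<2. g j)) \<partial>PiM {..<2::nat} (\<lambda>i. gamma_measure (if i = 0 then al0 else al1)))"
proof -
  have "(\<integral>\<^sup>+\<omega>. f (wt j \<omega>) \<partial>M)
     = (\<integral>\<^sup>+g. f (g 0 / (\<Sum>j<2. g j)) \<partial>PiM {..<2::nat} (\<lambda>i. gamma_measure (c * measure \<mu> (if i = 0 then {a j} else -{a j}))))"
    unfolding wt_def by (rule dp_two[OF dp]) auto
  also have "PiM {..<2::nat} (\<lambda>i. gamma_measure (c * measure \<mu> (if i = 0 then {a j} else -{a j})))
      = PiM {..<2::nat} (\<lambda>i. gamma_measure (if i = 0 then al0 else al1))"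
  proof (rule PiM_cong)
    fix i :: nat assume "i \<in> {..<2}"
    then have "i = 0 \<or> i = 1" by auto
    then show "gamma_measure (c * measure \<mu> (if i = 0 then {a j} else -{a j})) = gamma_measure (if i = 0 then al0 else al1)"
      using j by (auto simp: emp_compl emp_singleton al0_def al1_def algebra_simps)
  qed simp
  finally show ?thesis .
qed

lemma good_ae: "AE \<omega> in M. (\<Sum>j\<in>{1..N}. wt j \<omega>) = 1 \<and> (\<integral>x. x \<partial>D \<omega>) = (\<Sum>j\<in>{1..N}. a j * wt j \<omega>)"
  using zero_ae
proof (rule AE_mp, intro AE_I2 impI)
  fix \<omega> assume om: "\<omega> \<in> space M" and z: "measure (D \<omega>) (-S) = 0"
  have P: "prob_space (D \<omega>)" and sP: "sets (D \<omega>) = sets borel" using probD[OF om] setsD[OF om] by auto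
  have r: "(\<Sum>s\<in>S. g s) = (\<Sum>j\<in>{1..N}. g (a j))" for g :: "real \<Rightarrow> real"
    unfolding S_def using inj by (rule sum.reindex[unfolded comp_def])
  show "(\<Sum>j\<in>{1..N}. wt j \<omega>) = 1 \<and> (\<integral>x. x \<partial>D \<omega>) = (\<Sum>j\<in>{1..N}. a j * wt j \<omega>)"
    using finite_support_prob[OF P sP finS z, of "\<lambda>x. x"]
    by (simp add: r wt_def)
qed

lemma Ew: assumes j: "j \<in> {1..N}" shows "integral\<^sup>L M (wt j) = 1 / N"
proof -
  interpret M: prob_space M by (rule probM)
  define B where "B = (\<integral>\<^sup>+g. ennreal (g 0 / (\<Sum>j<2. g j)) \<partial>PiM {..<2::nat} (\<lambda>i. gamma_measure (if i = 0 then al0 else al1)))"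
  have e: "integral\<^sup>L M (wt i) = enn2real B" if i: "i \<in> {1..N}" for i
  proof -
    have "integral\<^sup>L M (wt i) = enn2real (\<integral>\<^sup>+\<omega>. ennreal (wt i \<omega>) \<partial>M)"
      by (rule integral_eq_nn_integral) (auto intro!: AE_I2 simp: wt_01)
    also have "(\<integral>\<^sup>+\<omega>. ennreal (wt i \<omega>) \<partial>M) = B"
      unfolding B_def by (rule w_law[OF i]) simp
    finally show ?thesis .
  qed
  have int: "integrable M (wt i)" for i
    by (rule M.integrable_const_bound[where B=1]) (auto intro!: AE_I2 dest: wt_01[where j=i])
  have "1 = integral\<^sup>L M (\<lambda>\<omega>. \<Sum>i\<in>{1..N}. wt i \<omega>)"
  proof -
    have "integral\<^sup>L M (\<lambda>\<omega>. \<Sum>i\<in>{1..N}. wt i \<omega>) = integral\<^sup>L M (\<lambda>_. 1)"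
      by (rule integral_cong_AE) (use good_ae in \<open>auto elim: AE_mp\<close>)
    then show ?thesis by (simp add: M.prob_space)
  qed
  also have "\<dots> = (\<Sum>i\<in>{1..N}. integral\<^sup>L M (wt i))"
    by (rule Bochner_Integration.integral_sum) (rule int)
  also have "\<dots> = N * enn2real B" using e by simp
  finally have "enn2real B = 1 / N" using N2 by (simp add: field_simps)
  then show ?thesis using e[OF j] by simp
qed

end


lemma pos_not_nonpos_Int: "(z::real) > 0 \<Longrightarrow> z \<notin> \<int>\<^sub>\<le>\<^sub>0"
  by (auto elim!: nonpos_Ints_cases)

lemma Gamma_plus1_real: "(z::real) > 0 \<Longrightarrow> Gamma (z + 1) = z * Gamma z"
  by (rule Gamma_plus1) (rule pos_not_nonpos_Int)

lemma gamma_ratio: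
  assumes e: "(e::real) > 0"
  shows "\<exists>K>0. \<forall>s. 0 < s \<and> s \<le> 1 \<longrightarrow> Gamma (s + e) / Gamma s \<le> K * s"
proof -
  let ?g = "\<lambda>s::real. Gamma (s + e) / Gamma (s + 1)"
  have "continuous_on {0..1} ?g"
  proof (intro continuous_at_imp_continuous_on ballI)
    fix s :: real assume s: "s \<in> {0..1}"
    have "Gamma (s + 1) \<noteq> 0" using s by (simp add: Gamma_eq_zero_iff pos_not_nonpos_Int)
    then show "isCont ?g s" using s e
      by (intro continuous_intros) (auto intro!: pos_not_nonpos_Int)
  qed
  then have "compact (?g ` {0..1})" by (intro compact_continuous_image) auto
  then obtain K where K: "\<And>x. x \<in> ?g ` {0..1} \<Longrightarrow> norm x \<le> K"
    using compact_imp_bounded bounded_iff by metis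
  show ?thesis
  proof (intro exI[of _ "max K 1"] conjI allI impI)
    fix s :: real assume s: "0 < s \<and> s \<le> 1"
    have "norm (?g s) \<le> K" using s by (intro K) auto
    then have "?g s \<le> K" by (metis abs_ge_self order_trans real_norm_def)
    then have "?g s \<le> max K 1" by simp
    moreover have "Gamma (s + e) / Gamma s = s * ?g s"
      using s Gamma_plus1_real[of s] Gamma_real_pos[of s] by (simp add: field_simps)
    moreover have "s * ?g s \<le> s * max K 1"
      using s \<open>?g s \<le> max K 1\<close> by (intro mult_left_mono) auto
    ultimately show "Gamma (s + e) / Gamma s \<le> max K 1 * s"
      by (simp add: mult.commute)
  qed simp
qed

context dpN begin

lemma E_nn_le:
  assumes h[measurable]: "h \<in> borel_measurable M" and h01: "\<And>\<omega>. \<omega> \<in> space M \<Longrightarrow> 0 \<le> h \<omega>"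
    and le: "(\<integral>\<^sup>+\<omega>. ennreal (h \<omega>) \<partial>M) \<le> ennreal B" and B: "B \<ge> 0"
  shows "integral\<^sup>L M h \<le> B"
proof -
  have "integral\<^sup>L M h = enn2real (\<integral>\<^sup>+\<omega>. ennreal (h \<omega>) \<partial>M)"
    by (rule integral_eq_nn_integral) (auto intro!: AE_I2 h01)
  also have "\<dots> \<le> B" using le B by (intro enn2real_leI)
  finally show ?thesis .
qed

lemma Ew1w:
  assumes j: "j \<in> {1..N}"
  shows "integral\<^sup>L M (\<lambda>\<omega>. wt j \<omega> * (1 - wt j \<omega>)) \<le> al0 * al1 * (1/2 + 1/c)"
proof (rule E_nn_le)
  show "0 \<le> wt j \<omega> * (1 - wt j \<omega>)" if "\<omega> \<in> space M" for \<omega> using wt_01[OF that, of j] by simp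
  show "0 \<le> al0 * al1 * (1/2 + 1/c)" using al_pos cpos by simp
  let ?\<alpha> = "\<lambda>i::nat. if i = 0 then al0 else al1"
  have "(\<integral>\<^sup>+\<omega>. ennreal (wt j \<omega> * (1 - wt j \<omega>)) \<partial>M)
     = (\<integral>\<^sup>+g. (\<lambda>u. ennreal (u * (1 - u))) (g 0 / (\<Sum>j<2. g j)) \<partial>PiM {..<2::nat} (\<lambda>i. gamma_measure (?\<alpha> i)))"
    by (rule w_law[OF j, where f="\<lambda>u. ennreal (u * (1 - u))"]) measurable
  also have "\<dots> \<le> ennreal (Gamma (?\<alpha> 0+1) * Gamma (?\<alpha> 1+1) / (Gamma (?\<alpha> 0) * Gamma (?\<alpha> 1) * Gamma (1+1)) * (1/(1+1) + 1/(?\<alpha> 0+?\<alpha> 1)))"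
  proof (rule Beta_gen)
    fix x y :: real assume x: "x > 0" and y: "y > 0"
    have "x / (x + y) * (1 - x / (x + y)) = x * y / ((x + y) * (x + y))"
      using x y by (simp add: field_simps)
    also have "(x + y) * (x + y) = (x + y) powr (1 + 1)"
      using x y by (simp add: powr_add power2_eq_square)
    finally show "ennreal (x / (x + y) * (1 - x / (x + y))) = ennreal (x powr 1 * y powr 1 / (x + y) powr (1 + 1))"
      using x y by simp
  qed (use al_pos in auto)
  also have "Gamma (?\<alpha> 0+1) * Gamma (?\<alpha> 1+1) / (Gamma (?\<alpha> 0) * Gamma (?\<alpha> 1) * Gamma (1+1)) * (1/(1+1) + 1/(?\<alpha> 0+?\<alpha> 1))
      = al0 * al1 * (1/2 + 1/c)"
  proof -
    have "Gamma al0 \<noteq> 0" "Gamma al1 \<noteq> 0" using al_pos by (auto dest: Gamma_real_pos[THEN less_imp_neq, symmetric])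
    then show ?thesis
      using al_pos Gamma_plus1_real[of al0] Gamma_plus1_real[of al1] Gamma_plus1_real[of 1]
      by (simp add: field_simps)
  qed
  finally show "(\<integral>\<^sup>+\<omega>. ennreal (wt j \<omega> * (1 - wt j \<omega>)) \<partial>M) \<le> ennreal (al0 * al1 * (1/2 + 1/c))" .
qed measurable

lemma Ewpow:
  assumes j: "j \<in> {1..N}" and e: "e > 0"
  shows "integral\<^sup>L M (\<lambda>\<omega>. wt j \<omega> powr e) \<le> Gamma (al0 + e) / (Gamma al0 * Gamma e) * (1/e + 1/c)"
proof (rule E_nn_le)
  show "0 \<le> wt j \<omega> powr e" for \<omega> by simp
  show "0 \<le> Gamma (al0 + e) / (Gamma al0 * Gamma e) * (1/e + 1/c)"
    using al_pos cpos e Gamma_real_pos[of "al0+e"] Gamma_real_pos[of al0] Gamma_real_pos[of e] by simp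
  let ?\<alpha> = "\<lambda>i::nat. if i = 0 then al0 else al1"
  have "(\<integral>\<^sup>+\<omega>. ennreal (wt j \<omega> powr e) \<partial>M)
     = (\<integral>\<^sup>+g. (\<lambda>u. ennreal (u powr e)) (g 0 / (\<Sum>j<2. g j)) \<partial>PiM {..<2::nat} (\<lambda>i. gamma_measure (?\<alpha> i)))"
    by (rule w_law[OF j, where f="\<lambda>u. ennreal (u powr e)"]) measurable
  also have "\<dots> \<le> ennreal (Gamma (?\<alpha> 0+e) * Gamma (?\<alpha> 1+0) / (Gamma (?\<alpha> 0) * Gamma (?\<alpha> 1) * Gamma (e+0)) * (1/(e+0) + 1/(?\<alpha> 0+?\<alpha> 1)))"
  proof (rule Beta_gen)
    fix x y :: real assume x: "x > 0" and y: "y > 0"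
    show "ennreal ((x / (x + y)) powr e) = ennreal (x powr e * y powr 0 / (x + y) powr (e + 0))"
      using x y by (simp add: powr_divide)
  qed (use al_pos e in auto)
  also have "Gamma (?\<alpha> 0+e) * Gamma (?\<alpha> 1+0) / (Gamma (?\<alpha> 0) * Gamma (?\<alpha> 1) * Gamma (e+0)) * (1/(e+0) + 1/(?\<alpha> 0+?\<alpha> 1))
      = Gamma (al0 + e) / (Gamma al0 * Gamma e) * (1/e + 1/c)"
  proof -
    have "Gamma al1 \<noteq> 0" using al_pos Gamma_real_pos[of al1] by (metis less_irrefl)
    then show ?thesis using al_pos(3) by simp
  qed
  finally show "(\<integral>\<^sup>+\<omega>. ennreal (wt j \<omega> powr e) \<partial>M) \<le> ennreal (Gamma (al0 + e) / (Gamma al0 * Gamma e) * (1/e + 1/c))" .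
qed measurable

end


lemma min2_add: "(a::real) \<ge> 0 \<Longrightarrow> b \<ge> 0 \<Longrightarrow> min 2 (a+b) \<le> min 2 a + min 2 b"
  by (auto simp: min_def)

lemma min2_sum:
  fixes y :: "nat \<Rightarrow> real"
  assumes "finite A" "\<And>j. j \<in> A \<Longrightarrow> 0 \<le> y j"
  shows "min 2 (\<Sum>j\<in>A. y j) \<le> (\<Sum>j\<in>A. min 2 (y j))"
  using assms
proof (induction A rule: finite_induct)
  case (insert k A)
  have "min 2 (\<Sum>j\<in>insert k A. y j) = min 2 (y k + (\<Sum>j\<in>A. y j))" using insert by simp
  also have "\<dots> \<le> min 2 (y k) + min 2 (\<Sum>j\<in>A. y j)"
    by (rule min2_add) (use insert.prems sum_nonneg[of A y] in auto)
  also have "\<dots> \<le> min 2 (y k) + (\<Sum>j\<in>A. min 2 (y j))" using insert by auto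
  finally show ?case using insert by simp
qed simp

lemma min2_powr:
  fixes y e :: real
  assumes "y \<ge> 0" "0 < e" "e \<le> 1"
  shows "min 2 y \<le> 2 * y powr e"
proof (cases "y \<le> 1")
  case True
  show ?thesis
  proof (cases "y = 0")
    case False
    then have "y powr 1 \<le> y powr e" using True assms by (intro powr_mono') auto
    then show ?thesis using assms False by simp
  qed simp
next
  case False
  then have "1 \<le> y powr e" using assms by (intro ge_one_powr_ge_zero) auto
  then show ?thesis by simp
qed

lemma det_ineq:
  fixes J :: "nat set" and w x :: "nat \<Rightarrow> real" and \<phi> :: "real \<Rightarrow> real"
  assumes J: "finite J" and w0: "\<And>j. j \<in> J \<Longrightarrow> 0 \<le> w j" and w1: "(\<Sum>j\<in>J. w j) = 1"
    and \<phi>1: "\<And>t. \<bar>\<phi> t\<bar> \<le> 1" and \<phi>L: "\<And>s t. \<bar>\<phi> s - \<phi> t\<bar> \<le> L * \<bar>s - t\<bar>"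
    and L: "L \<ge> 1" and R: "R \<ge> 0" and e: "0 < e" "e \<le> 1"
  shows "\<bar>\<phi> (\<Sum>j\<in>J. x j * w j) - (\<Sum>j\<in>J. w j * \<phi> (x j))\<bar>
     \<le> 2 * L * (\<Sum>j\<in>J. if R < \<bar>x j\<bar> then w j powr e * \<bar>x j\<bar> powr e else 0)
       + 2 * L * R * (\<Sum>j\<in>J. w j * (1 - w j))
       + 2 * (\<Sum>j\<in>J. if R < \<bar>x j\<bar> then w j else 0)"
proof -
  define m where "m = (\<Sum>j\<in>J. x j * w j)"
  define g where "g j = (if R < \<bar>x j\<bar> then 0 else x j)" for j
  define mG where "mG = (\<Sum>j\<in>J. g j * w j)"
  define mB where "mB = (\<Sum>j\<in>J. (if R < \<bar>x j\<bar> then x j else 0) * w j)"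
  define T where "T = min 2 (L * \<bar>mB\<bar>)"
  have mGB: "m = mG + mB"
  proof -
    have "x j * w j = g j * w j + (if R < \<bar>x j\<bar> then x j else 0) * w j" for j by (simp add: g_def)
    then show ?thesis unfolding m_def mG_def mB_def by (simp add: sum.distrib[symmetric])
  qed
  have wle1: "w i \<le> 1" if "i \<in> J" for i
  proof -
    have "w i \<le> (\<Sum>j\<in>J. w j)" using J that w0 by (intro member_le_sum) auto
    then show ?thesis using w1 by simp
  qed
  have step_a: "\<bar>\<phi> m - (\<Sum>j\<in>J. w j * \<phi> (x j))\<bar> \<le> (\<Sum>i\<in>J. w i * \<bar>\<phi> m - \<phi> (x i)\<bar>)"
  proof -
    have "\<phi> m - (\<Sum>j\<in>J. w j * \<phi> (x j)) = (\<Sum>i\<in>J. w i * (\<phi> m - \<phi> (x i)))"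
      using w1 by (simp add: right_diff_distrib sum_subtractf sum_distrib_right[symmetric])
    also have "\<bar>\<dots>\<bar> \<le> (\<Sum>i\<in>J. \<bar>w i * (\<phi> m - \<phi> (x i))\<bar>)" by (rule sum_abs)
    also have "\<dots> = (\<Sum>i\<in>J. w i * \<bar>\<phi> m - \<phi> (x i)\<bar>)"
      using w0 by (intro sum.cong) (auto simp: abs_mult)
    finally show ?thesis .
  qed
  have T1: "\<bar>\<phi> m - \<phi> mG\<bar> \<le> T"
  proof -
    have "\<bar>\<phi> m - \<phi> mG\<bar> \<le> 2" using \<phi>1[of m] \<phi>1[of mG] abs_triangle_ineq4[of "\<phi> m" "\<phi> mG"] by linarith
    moreover have "\<bar>\<phi> m - \<phi> mG\<bar> \<le> L * \<bar>mB\<bar>" using \<phi>L[of m mG] mGB by simp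
    ultimately show ?thesis unfolding T_def by simp
  qed
  have gi: "\<bar>mG - x i\<bar> \<le> 2 * R * (1 - w i)" if i: "i \<in> J" "\<bar>x i\<bar> \<le> R" for i
  proof -
    have "mG - x i = (\<Sum>j\<in>J. w j * (g j - x i))"
      unfolding mG_def using w1
      by (simp add: right_diff_distrib sum_subtractf sum_distrib_right[symmetric] mult.commute)
    also have "\<bar>\<dots>\<bar> \<le> (\<Sum>j\<in>J. \<bar>w j * (g j - x i)\<bar>)" by (rule sum_abs)
    also have "\<dots> \<le> (\<Sum>j\<in>J. if j = i then 0 else w j * (2 * R))"
    proof (rule sum_mono)
      fix j assume j: "j \<in> J"
      show "\<bar>w j * (g j - x i)\<bar> \<le> (if j = i then 0 else w j * (2 * R))"
      proof (cases "j = i")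
        case True then show ?thesis using i by (simp add: g_def)
      next
        case False
        have "\<bar>g j - x i\<bar> \<le> 2 * R" using i R by (auto simp: g_def)
        then have "\<bar>w j\<bar> * \<bar>g j - x i\<bar> \<le> \<bar>w j\<bar> * (2 * R)" by (intro mult_left_mono) auto
        then show ?thesis using False w0[OF j] by (simp add: abs_mult)
      qed
    qed
    also have "\<dots> = (\<Sum>j\<in>J. w j * (2 * R)) - w i * (2 * R)"
    proof -
      have "(\<Sum>j\<in>J. w j * (2 * R)) = (\<Sum>j\<in>J. (if j = i then 0 else w j * (2 * R)) + (if j = i then w j * (2 * R) else 0))"
        by (intro sum.cong) auto
      also have "\<dots> = (\<Sum>j\<in>J. if j = i then 0 else w j * (2 * R)) + (\<Sum>j\<in>J. if j = i then w j * (2 * R) else 0)"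
        by (rule sum.distrib)
      also have "(\<Sum>j\<in>J. if j = i then w j * (2 * R) else 0) = w i * (2 * R)"
        using J i by (simp add: sum.delta)
      finally show ?thesis by simp
    qed
    also have "(\<Sum>j\<in>J. w j * (2 * R)) = (\<Sum>j\<in>J. w j) * (2 * R)" by (rule sum_distrib_right[symmetric])
    also have "(\<Sum>j\<in>J. w j) * (2 * R) - w i * (2 * R) = 2 * R * (1 - w i)" using w1 by (simp add: algebra_simps)
    finally show ?thesis .
  qed
  have step_b: "\<bar>\<phi> m - \<phi> (x i)\<bar> \<le> T + (if R < \<bar>x i\<bar> then 2 else 2 * L * R * (1 - w i))" if i: "i \<in> J" for i
  proof -
    have "\<bar>\<phi> m - \<phi> (x i)\<bar> \<le> \<bar>\<phi> m - \<phi> mG\<bar> + \<bar>\<phi> mG - \<phi> (x i)\<bar>" using abs_triangle_ineq[of "\<phi> m - \<phi> mG" "\<phi> mG - \<phi> (x i)"] by simp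
    moreover have "\<bar>\<phi> mG - \<phi> (x i)\<bar> \<le> (if R < \<bar>x i\<bar> then 2 else 2 * L * R * (1 - w i))"
    proof (cases "R < \<bar>x i\<bar>")
      case True
      have "\<bar>\<phi> mG - \<phi> (x i)\<bar> \<le> 2" using \<phi>1[of mG] \<phi>1[of "x i"] abs_triangle_ineq4[of "\<phi> mG" "\<phi> (x i)"] by linarith
      then show ?thesis using True by simp
    next
      case False
      have "\<bar>\<phi> mG - \<phi> (x i)\<bar> \<le> L * \<bar>mG - x i\<bar>" by (rule \<phi>L)
      also have "\<dots> \<le> L * (2 * R * (1 - w i))" using gi[OF i] False L by (intro mult_left_mono) auto
      finally show ?thesis using False by (simp add: algebra_simps)
    qed
    ultimately show ?thesis using T1 by linarith
  qed
  have step_c: "(\<Sum>i\<in>J. w i * \<bar>\<phi> m - \<phi> (x i)\<bar>) \<le> T + 2 * L * R * (\<Sum>j\<in>J. w j * (1 - w j)) + 2 * (\<Sum>j\<in>J. if R < \<bar>x j\<bar> then w j else 0)"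
  proof -
    have "(\<Sum>i\<in>J. w i * \<bar>\<phi> m - \<phi> (x i)\<bar>) \<le> (\<Sum>i\<in>J. w i * (T + (if R < \<bar>x i\<bar> then 2 else 2 * L * R * (1 - w i))))"
      using step_b w0 by (intro sum_mono mult_left_mono) auto
    also have "\<dots> \<le> (\<Sum>i\<in>J. w i * T + (2 * L * R * (w i * (1 - w i)) + 2 * (if R < \<bar>x i\<bar> then w i else 0)))"
    proof (rule sum_mono)
      fix i assume i: "i \<in> J"
      have "0 \<le> 2 * L * R * (w i * (1 - w i))" using w0[OF i] wle1[OF i] L R by simp
      then show "w i * (T + (if R < \<bar>x i\<bar> then 2 else 2 * L * R * (1 - w i))) \<le> w i * T + (2 * L * R * (w i * (1 - w i)) + 2 * (if R < \<bar>x i\<bar> then w i else 0))"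
        by (cases "R < \<bar>x i\<bar>") (simp_all add: distrib_left mult_ac)
    qed
    also have "\<dots> = T * (\<Sum>i\<in>J. w i) + 2 * L * R * (\<Sum>j\<in>J. w j * (1 - w j)) + 2 * (\<Sum>j\<in>J. if R < \<bar>x j\<bar> then w j else 0)"
      by (simp add: sum.distrib sum_distrib_left sum_distrib_right mult.commute mult.left_commute)
    finally show ?thesis using w1 by simp
  qed
  have step_d: "T \<le> 2 * L * (\<Sum>j\<in>J. if R < \<bar>x j\<bar> then w j powr e * \<bar>x j\<bar> powr e else 0)"
  proof -
    have "L * \<bar>mB\<bar> \<le> (\<Sum>j\<in>J. L * \<bar>(if R < \<bar>x j\<bar> then x j else 0) * w j\<bar>)"
      unfolding mB_def using L by (simp add: sum_distrib_left[symmetric] sum_abs)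
    then have "T \<le> min 2 (\<Sum>j\<in>J. L * \<bar>(if R < \<bar>x j\<bar> then x j else 0) * w j\<bar>)"
      unfolding T_def by simp
    also have "\<dots> \<le> (\<Sum>j\<in>J. min 2 (L * \<bar>(if R < \<bar>x j\<bar> then x j else 0) * w j\<bar>))"
      using L J by (intro min2_sum) auto
    also have "\<dots> \<le> (\<Sum>j\<in>J. 2 * L * (if R < \<bar>x j\<bar> then w j powr e * \<bar>x j\<bar> powr e else 0))"
    proof (rule sum_mono)
      fix j assume j: "j \<in> J"
      show "min 2 (L * \<bar>(if R < \<bar>x j\<bar> then x j else 0) * w j\<bar>) \<le> 2 * L * (if R < \<bar>x j\<bar> then w j powr e * \<bar>x j\<bar> powr e else 0)"
      proof (cases "R < \<bar>x j\<bar>")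
        case True
        have "min 2 (L * \<bar>x j * w j\<bar>) \<le> 2 * (L * \<bar>x j * w j\<bar>) powr e"
          using L e by (intro min2_powr) auto
        also have "(L * \<bar>x j * w j\<bar>) powr e = L powr e * (w j powr e * \<bar>x j\<bar> powr e)"
          using L w0[OF j] by (simp add: abs_mult powr_mult mult_ac)
        also have "L powr e \<le> L powr 1" using L e by (intro powr_mono) auto
        then have "2 * (L powr e * (w j powr e * \<bar>x j\<bar> powr e)) \<le> 2 * (L * (w j powr e * \<bar>x j\<bar> powr e))"
          using L by (intro mult_left_mono mult_right_mono) auto
        finally show ?thesis using True by (simp add: mult_ac)
      qed simp
    qed
    also have "\<dots> = 2 * L * (\<Sum>j\<in>J. if R < \<bar>x j\<bar> then w j powr e * \<bar>x j\<bar> powr e else 0)"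
      by (simp add: sum_distrib_left)
    finally show ?thesis .
  qed
  show ?thesis using step_a step_c step_d unfolding m_def[symmetric] by linarith
qed


context dpN begin

lemma int_bdd:
  fixes h :: "'a \<Rightarrow> real"
  assumes [measurable]: "h \<in> borel_measurable M" and "\<And>\<omega>. \<omega> \<in> space M \<Longrightarrow> \<bar>h \<omega>\<bar> \<le> B"
  shows "integrable M h"
proof -
  interpret M: prob_space M by (rule probM)
  show ?thesis by (rule M.integrable_const_bound[where B=B]) (use assms in auto)
qed

lemma Ewpow_bound:
  assumes j: "j \<in> {1..N}" and e: "e > 0" and c1: "c \<le> 1"
    and K: "\<And>s. 0 < s \<Longrightarrow> s \<le> 1 \<Longrightarrow> Gamma (s + e) / Gamma s \<le> K * s"
  shows "integral\<^sup>L M (\<lambda>\<omega>. wt j \<omega> powr e) \<le> K * (1/e + 1) / Gamma e / N"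
proof -
  have Ge: "Gamma e > 0" using e by simp
  have a01: "0 < al0" "al0 \<le> 1" using al_pos c1 by auto
  have "integral\<^sup>L M (\<lambda>\<omega>. wt j \<omega> powr e) \<le> Gamma (al0 + e) / (Gamma al0 * Gamma e) * (1/e + 1/c)"
    by (rule Ewpow[OF j e])
  also have "\<dots> = (Gamma (al0 + e) / Gamma al0) * ((1/e + 1/c) / Gamma e)"
    by (simp add: field_simps)
  also have "\<dots> \<le> (K * al0) * ((1/e + 1/c) / Gamma e)"
    using K[OF a01] e cpos Ge by (intro mult_right_mono) auto
  also have "\<dots> = K * (c/e + 1) / Gamma e / N"
  proof -
    have "real N > 0" using N2 by simp
    moreover have "Gamma e \<noteq> 0" using Ge by linarith
    moreover have "c \<noteq> 0" "e \<noteq> 0" using cpos e by auto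
    ultimately show ?thesis by (simp add: al0_def field_simps)
  qed
  also have "\<dots> \<le> K * (1/e + 1) / Gamma e / N"
  proof -
    have K0: "K \<ge> 0"
    proof -
      have "0 < Gamma (1 + e) / Gamma 1" using e by simp
      also have "\<dots> \<le> K * 1" using K[of 1] by (simp add: add.commute)
      finally show ?thesis by simp
    qed
    have "c / e \<le> 1 / e" using c1 e by (simp add: divide_right_mono)
    then have "K * (c/e + 1) \<le> K * (1/e + 1)" using K0 by (intro mult_left_mono) auto
    then show ?thesis using Ge N2 by (intro divide_right_mono) auto
  qed
  finally show ?thesis .
qed

lemma Ew1w_bound:
  assumes j: "j \<in> {1..N}" and c1: "c \<le> 1"
  shows "integral\<^sup>L M (\<lambda>\<omega>. wt j \<omega> * (1 - wt j \<omega>)) \<le> 2 * c / N"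
proof -
  have "integral\<^sup>L M (\<lambda>\<omega>. wt j \<omega> * (1 - wt j \<omega>)) \<le> al0 * al1 * (1/2 + 1/c)" by (rule Ew1w[OF j])
  also have "\<dots> \<le> al0 * c * (1/2 + 1/c)"
    using al_pos cpos by (intro mult_right_mono mult_left_mono) auto
  also have "\<dots> = (c * c / 2 + c) / N" using cpos N2 by (simp add: al0_def field_simps)
  also have "\<dots> \<le> (2 * c) / N"
  proof -
    have "c * c \<le> c * 1" using cpos c1 by (intro mult_left_mono) auto
    then have "c * c / 2 + c \<le> 2 * c" using cpos by linarith
    then show ?thesis using N2 by (intro divide_right_mono) auto
  qed
  finally show ?thesis .
qed

lemma main_bound:
  fixes \<phi> :: "real \<Rightarrow> real"
  assumes \<phi>m[measurable]: "\<phi> \<in> borel_measurable borel" and \<phi>1: "\<And>t. \<bar>\<phi> t\<bar> \<le> 1"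
    and \<phi>L: "\<And>s t. \<bar>\<phi> s - \<phi> t\<bar> \<le> L * \<bar>s - t\<bar>" and L: "L \<ge> 1" and R: "R \<ge> 0"
    and e: "0 < e" "e \<le> 1" and c1: "c \<le> 1"
    and K: "\<And>s. 0 < s \<Longrightarrow> s \<le> 1 \<Longrightarrow> Gamma (s + e) / Gamma s \<le> K * s"
  shows "\<bar>integral\<^sup>L M (\<lambda>\<omega>. \<phi> (\<integral>x. x \<partial>D \<omega>)) - integral\<^sup>L \<mu> \<phi>\<bar>
      \<le> 2 * L * (K * (1/e + 1) / Gamma e) * ((\<Sum>j\<in>{1..N}. if R < \<bar>a j\<bar> then \<bar>a j\<bar> powr e else 0) / N)
        + 4 * L * R * c + 2 * ((\<Sum>j\<in>{1..N}. if R < \<bar>a j\<bar> then 1 else 0) / N)"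
proof -
  define Ce where "Ce = K * (1/e + 1) / Gamma e"
  have mm[measurable]: "(\<lambda>\<omega>. \<integral>x. x \<partial>D \<omega>) \<in> borel_measurable M"
    by (rule measurable_compose[OF Dm integral_measurable_subprob_algebra]) simp
  define f where "f \<omega> = \<phi> (\<integral>x. x \<partial>D \<omega>)" for \<omega>
  define g where "g \<omega> = (\<Sum>j\<in>{1..N}. wt j \<omega> * \<phi> (a j))" for \<omega>
  define hj where "hj j \<omega> = 2 * L * (if R < \<bar>a j\<bar> then wt j \<omega> powr e * \<bar>a j\<bar> powr e else 0)
      + 2 * L * R * (wt j \<omega> * (1 - wt j \<omega>)) + 2 * (if R < \<bar>a j\<bar> then wt j \<omega> else 0)" for j \<omega>
  have fm[measurable]: "f \<in> borel_measurable M" unfolding f_def by measurable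
  have gm[measurable]: "g \<in> borel_measurable M" unfolding g_def by measurable
  have hjm[measurable]: "hj j \<in> borel_measurable M" for j unfolding hj_def by measurable
  have fi: "integrable M f" by (rule int_bdd[where B=1]) (auto simp: f_def \<phi>1)
  have wi: "integrable M (wt j)" for j by (rule int_bdd[where B=1]) (auto dest: wt_01[where j=j])
  have gi: "integrable M g" unfolding g_def
    by (intro Bochner_Integration.integrable_sum integrable_mult_left wi)
  have w1wi: "integrable M (\<lambda>\<omega>. wt j \<omega> * (1 - wt j \<omega>))" for j
    by (rule int_bdd[where B=1]) (auto dest!: wt_01[where j=j] simp: abs_mult mult_le_one)
  have wpi: "integrable M (\<lambda>\<omega>. wt j \<omega> powr e)" for j
  proof (rule int_bdd[where B=1])
    fix \<omega> assume "\<omega> \<in> space M"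
    then have "0 \<le> wt j \<omega>" "wt j \<omega> \<le> 1" using wt_01 by auto
    then have "wt j \<omega> powr e \<le> 1 powr e" using e by (intro powr_mono2) auto
    then show "\<bar>wt j \<omega> powr e\<bar> \<le> 1" by simp
  qed measurable
  have hji: "integrable M (hj j)" for j
    unfolding hj_def by (cases "R < \<bar>a j\<bar>") (auto intro!: Bochner_Integration.integrable_add integrable_mult_right integrable_mult_left wpi w1wi wi)
  have hi: "integrable M (\<lambda>\<omega>. \<Sum>j\<in>{1..N}. hj j \<omega>)" by (intro Bochner_Integration.integrable_sum hji)
  have Eg: "integral\<^sup>L M g = integral\<^sup>L \<mu> \<phi>"
  proof -
    have "integral\<^sup>L M g = (\<Sum>j\<in>{1..N}. integral\<^sup>L M (\<lambda>\<omega>. wt j \<omega> * \<phi> (a j)))"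
      unfolding g_def by (rule Bochner_Integration.integral_sum) (intro integrable_mult_left wi)
    also have "\<dots> = (\<Sum>j\<in>{1..N}. \<phi> (a j) / N)"
      by (intro sum.cong refl) (simp add: Ew)
    also have "\<dots> = integral\<^sup>L \<mu> \<phi>" by (simp add: emp_integral sum_divide_distrib)
    finally show ?thesis .
  qed
  have ae: "AE \<omega> in M. \<bar>f \<omega> - g \<omega>\<bar> \<le> (\<Sum>j\<in>{1..N}. hj j \<omega>)"
    using good_ae
  proof (rule AE_mp, intro AE_I2 impI)
    fix \<omega> assume om: "\<omega> \<in> space M"
      and G: "(\<Sum>j\<in>{1..N}. wt j \<omega>) = 1 \<and> (\<integral>x. x \<partial>D \<omega>) = (\<Sum>j\<in>{1..N}. a j * wt j \<omega>)"
    have "\<bar>\<phi> (\<Sum>j\<in>{1..N}. a j * wt j \<omega>) - (\<Sum>j\<in>{1..N}. wt j \<omega> * \<phi> (a j))\<bar>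
      \<le> 2 * L * (\<Sum>j\<in>{1..N}. if R < \<bar>a j\<bar> then wt j \<omega> powr e * \<bar>a j\<bar> powr e else 0)
       + 2 * L * R * (\<Sum>j\<in>{1..N}. wt j \<omega> * (1 - wt j \<omega>))
       + 2 * (\<Sum>j\<in>{1..N}. if R < \<bar>a j\<bar> then wt j \<omega> else 0)"
      by (rule det_ineq) (use G wt_01[OF om] \<phi>1 \<phi>L L R e in auto)
    also have "\<dots> = (\<Sum>j\<in>{1..N}. hj j \<omega>)"
      unfolding hj_def by (simp add: sum.distrib sum_distrib_left)
    finally show "\<bar>f \<omega> - g \<omega>\<bar> \<le> (\<Sum>j\<in>{1..N}. hj j \<omega>)" using G by (simp add: f_def g_def)
  qed
  have Ehj: "integral\<^sup>L M (hj j) \<le> 2 * L * (if R < \<bar>a j\<bar> then Ce / N * \<bar>a j\<bar> powr e else 0)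
      + 2 * L * R * (2 * c / N) + 2 * (if R < \<bar>a j\<bar> then 1 / N else 0)" if j: "j \<in> {1..N}" for j
  proof -
    have "integral\<^sup>L M (hj j) = 2 * L * (if R < \<bar>a j\<bar> then integral\<^sup>L M (\<lambda>\<omega>. wt j \<omega> powr e) * \<bar>a j\<bar> powr e else 0)
      + 2 * L * R * integral\<^sup>L M (\<lambda>\<omega>. wt j \<omega> * (1 - wt j \<omega>)) + 2 * (if R < \<bar>a j\<bar> then integral\<^sup>L M (wt j) else 0)"
      unfolding hj_def
      by (cases "R < \<bar>a j\<bar>") (simp_all add: wpi w1wi wi)
    also have "\<dots> \<le> 2 * L * (if R < \<bar>a j\<bar> then Ce / N * \<bar>a j\<bar> powr e else 0)
      + 2 * L * R * (2 * c / N) + 2 * (if R < \<bar>a j\<bar> then 1 / N else 0)"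
    proof -
      have A: "(if R < \<bar>a j\<bar> then integral\<^sup>L M (\<lambda>\<omega>. wt j \<omega> powr e) * \<bar>a j\<bar> powr e else 0) \<le> (if R < \<bar>a j\<bar> then Ce / N * \<bar>a j\<bar> powr e else 0)"
      proof -
        have "integral\<^sup>L M (\<lambda>\<omega>. wt j \<omega> powr e) * \<bar>a j\<bar> powr e \<le> Ce / N * \<bar>a j\<bar> powr e"
          using Ewpow_bound[OF j e(1) c1 K] unfolding Ce_def by (intro mult_right_mono) auto
        then show ?thesis by simp
      qed
      have B: "integral\<^sup>L M (\<lambda>\<omega>. wt j \<omega> * (1 - wt j \<omega>)) \<le> 2 * c / N" by (rule Ew1w_bound[OF j c1])
      have C: "(if R < \<bar>a j\<bar> then integral\<^sup>L M (wt j) else 0) = (if R < \<bar>a j\<bar> then 1 / N else 0)"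
        using Ew[OF j] by simp
      have "2 * L * (if R < \<bar>a j\<bar> then integral\<^sup>L M (\<lambda>\<omega>. wt j \<omega> powr e) * \<bar>a j\<bar> powr e else 0) \<le> 2 * L * (if R < \<bar>a j\<bar> then Ce / N * \<bar>a j\<bar> powr e else 0)"
        using A L by (intro mult_left_mono) auto
      moreover have "2 * L * R * integral\<^sup>L M (\<lambda>\<omega>. wt j \<omega> * (1 - wt j \<omega>)) \<le> 2 * L * R * (2 * c / N)"
        using B L R by (intro mult_left_mono) auto
      ultimately show ?thesis using C by linarith
    qed
    finally show ?thesis .
  qed
  have "\<bar>integral\<^sup>L M f - integral\<^sup>L \<mu> \<phi>\<bar> = \<bar>integral\<^sup>L M (\<lambda>\<omega>. f \<omega> - g \<omega>)\<bar>"
    using fi gi Eg by simp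
  also have "\<dots> \<le> integral\<^sup>L M (\<lambda>\<omega>. \<bar>f \<omega> - g \<omega>\<bar>)"
    using integral_norm_bound[of M "\<lambda>\<omega>. f \<omega> - g \<omega>"] by simp
  also have "\<dots> \<le> integral\<^sup>L M (\<lambda>\<omega>. \<Sum>j\<in>{1..N}. hj j \<omega>)"
    by (rule integral_mono_AE) (use fi gi hi ae in auto)
  also have "\<dots> = (\<Sum>j\<in>{1..N}. integral\<^sup>L M (hj j))"
    by (rule Bochner_Integration.integral_sum) (rule hji)
  also have "\<dots> \<le> (\<Sum>j\<in>{1..N}. 2 * L * (if R < \<bar>a j\<bar> then Ce / N * \<bar>a j\<bar> powr e else 0)
      + 2 * L * R * (2 * c / N) + 2 * (if R < \<bar>a j\<bar> then 1 / N else 0))"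
    by (rule sum_mono) (rule Ehj)
  also have "\<dots> = 2 * L * Ce * ((\<Sum>j\<in>{1..N}. if R < \<bar>a j\<bar> then \<bar>a j\<bar> powr e else 0) / N)
        + 4 * L * R * c + 2 * ((\<Sum>j\<in>{1..N}. if R < \<bar>a j\<bar> then 1 else 0) / N)"
  proof -
    have s1: "(\<Sum>j\<in>{1..N}. 2 * L * (if R < \<bar>a j\<bar> then Ce / N * \<bar>a j\<bar> powr e else 0))
        = 2 * L * Ce * ((\<Sum>j\<in>{1..N}. if R < \<bar>a j\<bar> then \<bar>a j\<bar> powr e else 0) / N)"
      by (simp add: sum_distrib_left sum_divide_distrib if_distrib if_distribR mult_ac cong: if_cong)
    have s2: "(\<Sum>j\<in>{1..N}. 2 * L * R * (2 * c / N)) = 4 * L * R * c" using N2 by simp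
    have s3: "(\<Sum>j\<in>{1..N}. 2 * (if R < \<bar>a j\<bar> then 1 / N else 0)) = 2 * ((\<Sum>j\<in>{1..N}. if R < \<bar>a j\<bar> then 1 else 0) / N)"
    proof -
      have "(\<Sum>j\<in>{1..N}. 2 * (if R < \<bar>a j\<bar> then 1 / N else 0)) = (\<Sum>j\<in>{1..N}. 2 * (if R < \<bar>a j\<bar> then 1 else 0) / N)"
        by (intro sum.cong) auto
      also have "\<dots> = 2 * (\<Sum>j\<in>{1..N}. (if R < \<bar>a j\<bar> then 1 else 0)) / N"
        by (simp add: sum_divide_distrib[symmetric] sum_distrib_left[symmetric])
      finally show ?thesis by simp
    qed
    show ?thesis using s1 s2 s3 by (simp add: sum.distrib)
  qed
  finally show ?thesis unfolding f_def Ce_def .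
qed

end


lemma le_powr_small: "0 \<le> (t::real) \<Longrightarrow> t \<le> 1 \<Longrightarrow> 0 < e \<Longrightarrow> e \<le> 1 \<Longrightarrow> t \<le> t powr e"
proof (cases "t = 0")
  case False
  assume "0 \<le> t" "t \<le> 1" "0 < e" "e \<le> 1"
  then have "t powr 1 \<le> t powr e" using False by (intro powr_mono') auto
  then show ?thesis using False \<open>0 \<le> t\<close> by simp
qed simp

lemma powr_subadd:
  fixes A B e :: real
  assumes A: "A \<ge> 0" and B: "B \<ge> 0" and e: "0 < e" "e \<le> 1"
  shows "(A + B) powr e \<le> A powr e + B powr e"
proof (cases "A + B = 0")
  case True then show ?thesis using A B by simp
next
  case False
  define S where "S = A + B"
  have S: "S > 0" using A B False by (simp add: S_def)
  have "A / S \<le> (A / S) powr e" using A B S e by (intro le_powr_small) (auto simp: S_def)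
  moreover have "B / S \<le> (B / S) powr e" using A B S e by (intro le_powr_small) (auto simp: S_def)
  moreover have "A / S + B / S = 1" using S by (simp add: S_def add_divide_distrib[symmetric])
  ultimately have "1 \<le> (A / S) powr e + (B / S) powr e" by linarith
  also have "\<dots> = (A powr e + B powr e) / S powr e"
    using A B S by (simp add: powr_divide add_divide_distrib)
  finally show ?thesis using S by (simp add: S_def field_simps)
qed

lemma powr_lip1:
  fixes z d e :: real
  assumes z: "z \<ge> 1" and d: "d \<ge> 0" and e: "0 < e" "e \<le> 1"
  shows "(z + d) powr e - z powr e \<le> d"
proof -
  have zp: "z > 0" using z by simp
  have dz: "d / z \<ge> 0" using d zp by simp
  have "(1 + d / z) powr e * 1 powr (1 - e) \<le> e * (1 + d / z) + (1 - e) * 1"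
    using e dz by (intro Youngs_inequality_0) auto
  then have Y: "(1 + d / z) powr e \<le> 1 + e * (d / z)" by (simp add: algebra_simps)
  have "(z + d) powr e = z powr e * (1 + d / z) powr e"
  proof -
    have "z + d = z * (1 + d / z)" using zp by (simp add: field_simps)
    then show ?thesis using zp dz by (simp add: powr_mult)
  qed
  also have "\<dots> \<le> z powr e * (1 + e * (d / z))"
    using Y by (intro mult_left_mono) auto
  also have "\<dots> = z powr e + e * d * (z powr e / z)" using zp by (simp add: field_simps)
  also have "z powr e / z = z powr (e - 1)" using zp by (simp add: powr_diff)
  finally have 1: "(z + d) powr e \<le> z powr e + e * d * z powr (e - 1)" .
  have "z powr (e - 1) \<le> 1 powr (e - 1)" using z e by (intro powr_mono2') auto
  then have "z powr (e - 1) \<le> 1" by simp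
  then have "e * d * z powr (e - 1) \<le> e * d * 1" using e d by (intro mult_left_mono) auto
  also have "e * d * 1 \<le> d" using e d by (simp add: mult_left_le_one_le)
  finally show ?thesis using 1 by linarith
qed

lemma min_powr_mono:
  fixes d d' e :: real
  assumes "0 \<le> d" "d \<le> d'" "0 < e"
  shows "min d (d powr e) \<le> min d' (d' powr e)"
proof -
  have "d powr e \<le> d' powr e" using assms by (intro powr_mono2) auto
  then show ?thesis using assms by (auto simp: min_def)
qed

lemma h1_lip:
  fixes s r e :: real
  assumes s: "s \<ge> 0" and r: "r \<ge> 0" and e: "0 < e" "e \<le> 1"
  shows "\<bar>(1+s) powr e - (1+r) powr e\<bar> \<le> min \<bar>s-r\<bar> (\<bar>s-r\<bar> powr e)"
proof -
  have main: "\<bar>(1+s) powr e - (1+r) powr e\<bar> \<le> min \<bar>s-r\<bar> (\<bar>s-r\<bar> powr e)" if rs: "r \<le> s" "r \<ge> 0" for s r :: real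
  proof -
    define d where "d = s - r"
    have d: "d \<ge> 0" using rs by (simp add: d_def)
    have sd: "1 + s = (1 + r) + d" by (simp add: d_def)
    have nn: "(1+r) powr e \<le> (1+s) powr e" using rs e by (intro powr_mono2) auto
    have a1: "(1+s) powr e - (1+r) powr e \<le> d"
      unfolding sd using rs d e by (intro powr_lip1) auto
    have a2: "(1+s) powr e - (1+r) powr e \<le> d powr e"
      unfolding sd using powr_subadd[of "1+r" d e] rs d e by simp
    show ?thesis using a1 a2 nn d by (simp add: d_def)
  qed
  show ?thesis
  proof (cases "r \<le> s")
    case True then show ?thesis using main[of r s] r by simp
  next
    case False then show ?thesis using main[of s r] s by (simp add: abs_minus_commute)
  qed
qed

lemma H_tail: "0 < e \<Longrightarrow> e \<le> 1 \<Longrightarrow> (\<lambda>x. max 0 ((1 + \<bar>x\<bar>) powr e - C)) \<in> H_eta e"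
  unfolding H_eta_def
proof (safe)
  fix x y :: real assume e: "0 < e" "e \<le> 1"
  have "\<bar>max 0 ((1 + \<bar>x\<bar>) powr e - C) - max 0 ((1 + \<bar>y\<bar>) powr e - C)\<bar> \<le> \<bar>(1 + \<bar>x\<bar>) powr e - (1 + \<bar>y\<bar>) powr e\<bar>"
    by (auto simp: max_def)
  also have "\<dots> \<le> min \<bar>\<bar>x\<bar> - \<bar>y\<bar>\<bar> (\<bar>\<bar>x\<bar> - \<bar>y\<bar>\<bar> powr e)" using e by (intro h1_lip) auto
  also have "\<dots> \<le> min \<bar>x - y\<bar> (\<bar>x - y\<bar> powr e)" using e by (intro min_powr_mono) auto
  finally show "\<bar>max 0 ((1 + \<bar>x\<bar>) powr e - C) - max 0 ((1 + \<bar>y\<bar>) powr e - C)\<bar> \<le> min \<bar>x - y\<bar> (\<bar>x - y\<bar> powr e)" .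
qed

lemma H_one: "0 < e \<Longrightarrow> e \<le> 1 \<Longrightarrow> (\<lambda>x. (1 + \<bar>x\<bar>) powr e) \<in> H_eta e"
  unfolding H_eta_def
proof (safe)
  fix x y :: real assume e: "0 < e" "e \<le> 1"
  have "\<bar>(1 + \<bar>x\<bar>) powr e - (1 + \<bar>y\<bar>) powr e\<bar> \<le> min \<bar>\<bar>x\<bar> - \<bar>y\<bar>\<bar> (\<bar>\<bar>x\<bar> - \<bar>y\<bar>\<bar> powr e)" using e by (intro h1_lip) auto
  also have "\<dots> \<le> min \<bar>x - y\<bar> (\<bar>x - y\<bar> powr e)" using e by (intro min_powr_mono) auto
  finally show "\<bar>(1 + \<bar>x\<bar>) powr e - (1 + \<bar>y\<bar>) powr e\<bar> \<le> min \<bar>x - y\<bar> (\<bar>x - y\<bar> powr e)" .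
qed

lemma H_scale:
  fixes \<phi> :: "real \<Rightarrow> real"
  assumes \<phi>1: "\<And>t. \<bar>\<phi> t\<bar> \<le> 1" and \<phi>L: "\<And>s t. \<bar>\<phi> s - \<phi> t\<bar> \<le> L * \<bar>s - t\<bar>" and L: "L \<ge> 1"
    and e: "0 < e" "e \<le> 1"
  shows "(\<lambda>x. \<phi> x / (2 * L)) \<in> H_eta e"
  unfolding H_eta_def
proof (safe)
  fix x y :: real
  define d where "d = \<bar>x - y\<bar>"
  have d0: "d \<ge> 0" by (simp add: d_def)
  have eq: "\<bar>\<phi> x / (2 * L) - \<phi> y / (2 * L)\<bar> = \<bar>\<phi> x - \<phi> y\<bar> / (2 * L)"
    using L by (simp add: diff_divide_distrib[symmetric])
  have b1: "\<bar>\<phi> x - \<phi> y\<bar> / (2 * L) \<le> d / 2"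
    using \<phi>L[of x y] L by (simp add: d_def divide_le_eq field_simps)
  have b2: "\<bar>\<phi> x - \<phi> y\<bar> / (2 * L) \<le> 1"
  proof -
    have "\<bar>\<phi> x - \<phi> y\<bar> \<le> 2" using \<phi>1[of x] \<phi>1[of y] abs_triangle_ineq4[of "\<phi> x" "\<phi> y"] by linarith
    also have "2 \<le> 2 * L" using L by simp
    finally show ?thesis using L by simp
  qed
  have "\<bar>\<phi> x - \<phi> y\<bar> / (2 * L) \<le> min d (d powr e)"
  proof (cases "d \<le> 1")
    case True
    then have "d \<le> d powr e" using d0 e by (intro le_powr_small) auto
    then show ?thesis using b1 d0 by simp
  next
    case False
    then have "1 \<le> d powr e" using e by (intro ge_one_powr_ge_zero) auto
    then show ?thesis using b1 b2 d0 by simp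
  qed
  then show "\<bar>\<phi> x / (2 * L) - \<phi> y / (2 * L)\<bar> \<le> min \<bar>x - y\<bar> (\<bar>x - y\<bar> powr e)"
    using eq by (simp add: d_def)
qed

lemma dW_close:
  assumes "dW e \<mu> \<nu> < ereal \<epsilon>" and h: "h \<in> H_eta e"
  shows "integrable \<mu> h" "integrable \<nu> h" "\<bar>(\<integral>x. h x \<partial>\<mu>) - (\<integral>x. h x \<partial>\<nu>)\<bar> < \<epsilon>"
proof -
  have c: "\<forall>h\<in>H_eta e. integrable \<mu> h \<and> integrable \<nu> h"
  proof (rule ccontr)
    assume "\<not> ?thesis"
    then have "dW e \<mu> \<nu> = \<infinity>" unfolding dW_def by (simp only: if_False)
    then show False using assms by simp
  qed
  then show "integrable \<mu> h" "integrable \<nu> h" using h by auto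
  have "ereal \<bar>(\<integral>x. h x \<partial>\<mu>) - (\<integral>x. h x \<partial>\<nu>)\<bar> \<le> (SUP h\<in>H_eta e. ereal \<bar>(\<integral>x. h x \<partial>\<mu>) - (\<integral>x. h x \<partial>\<nu>)\<bar>)"
    using h by (rule SUP_upper)
  also have "\<dots> = dW e \<mu> \<nu>" using c by (simp add: dW_def)
  also have "\<dots> < ereal \<epsilon>" by fact
  finally show "\<bar>(\<integral>x. h x \<partial>\<mu>) - (\<integral>x. h x \<partial>\<nu>)\<bar> < \<epsilon>" by simp
qed


lemma cts_step_repr: "a < b \<Longrightarrow> cts_step a b t = max 0 (min 1 ((b - t) / (b - a)))"
  by (auto simp: cts_step_def field_simps min_def max_def)

lemma cts_step_bdd: "\<bar>cts_step a b t\<bar> \<le> 1"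
  by (auto simp: cts_step_def field_simps)

lemma cts_step_lip:
  assumes ab: "a < b"
  shows "\<bar>cts_step a b s - cts_step a b t\<bar> \<le> max 1 (1 / (b - a)) * \<bar>s - t\<bar>"
proof -
  have "\<bar>cts_step a b s - cts_step a b t\<bar> \<le> \<bar>(b - s) / (b - a) - (b - t) / (b - a)\<bar>"
    unfolding cts_step_repr[OF ab] by (auto simp: min_def max_def)
  also have "\<dots> = (1 / (b - a)) * \<bar>s - t\<bar>"
    using ab by (simp add: diff_divide_distrib[symmetric] abs_divide field_simps)
  also have "\<dots> \<le> max 1 (1 / (b - a)) * \<bar>s - t\<bar>" by (intro mult_right_mono) auto
  finally show ?thesis .
qed

lemma tail_bound:
  fixes e K t :: real
  assumes e: "0 < e" "e \<le> 1" and K: "K \<ge> 0" and t: "2 powr (1/e) * (1 + K) < \<bar>t\<bar>"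
  shows "\<bar>t\<bar> powr e \<le> 2 * max 0 ((1 + \<bar>t\<bar>) powr e - (1 + K) powr e)"
    and "1 \<le> max 0 ((1 + \<bar>t\<bar>) powr e - (1 + K) powr e)"
proof -
  define R where "R = 2 powr (1/e) * (1 + K)"
  have Rp: "R > 0" using K by (simp add: R_def)
  have "R powr e = (2 powr (1/e)) powr e * (1 + K) powr e"
    using K by (simp add: R_def powr_mult)
  also have "(2 powr (1/e)) powr e = 2" using e by (simp add: powr_powr)
  finally have Re: "R powr e = 2 * (1 + K) powr e" .
  have Rt: "R < \<bar>t\<bar>" using t by (simp add: R_def)
  have "R powr e < \<bar>t\<bar> powr e" using Rt Rp e by (intro powr_less_mono2) auto
  also have "\<bar>t\<bar> powr e \<le> (1 + \<bar>t\<bar>) powr e" using e by (intro powr_mono2) auto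
  finally have big: "2 * (1 + K) powr e < (1 + \<bar>t\<bar>) powr e" using Re by simp
  have mx: "(1 + \<bar>t\<bar>) powr e - (1 + K) powr e \<le> max 0 ((1 + \<bar>t\<bar>) powr e - (1 + K) powr e)" by simp
  have "\<bar>t\<bar> powr e \<le> (1 + \<bar>t\<bar>) powr e" using e by (intro powr_mono2) auto
  then have "\<bar>t\<bar> powr e \<le> 2 * ((1 + \<bar>t\<bar>) powr e - (1 + K) powr e)" using big
    by (smt (verit))
  also have "\<dots> \<le> 2 * max 0 ((1 + \<bar>t\<bar>) powr e - (1 + K) powr e)" by (intro mult_left_mono) auto
  finally show "\<bar>t\<bar> powr e \<le> 2 * max 0 ((1 + \<bar>t\<bar>) powr e - (1 + K) powr e)" .
  have "1 \<le> (1 + K) powr e" using K e by (intro ge_one_powr_ge_zero) auto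
  then have "1 \<le> (1 + \<bar>t\<bar>) powr e - (1 + K) powr e" using big by (smt (verit))
  then show "1 \<le> max 0 ((1 + \<bar>t\<bar>) powr e - (1 + K) powr e)" by simp
qed

lemma strict_chain:
  fixes a :: "nat \<Rightarrow> real"
  assumes "\<And>j. 1 \<le> j \<Longrightarrow> j < N \<Longrightarrow> a j < a (Suc j)"
  shows "inj_on a {1..N}"
proof -
  have lt: "a i < a k" if "1 \<le> i" "i < k" "k \<le> N" for i k
    using that
  proof (induction k)
    case 0 then show ?case by simp
  next
    case (Suc k)
    show ?case
    proof (cases "i = k")
      case True then show ?thesis using Suc.prems assms by simp
    next
      case False
      then have "a i < a k" using Suc by simp
      also have "a k < a (Suc k)" using Suc.prems False assms by simp
      finally show ?thesis .
    qed
  qed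
  show ?thesis
  proof (rule inj_onI)
    fix i k assume "i \<in> {1..N}" "k \<in> {1..N}" "a i = a k"
    then show "i = k" using lt[of i k] lt[of k i] by (cases i k rule: linorder_cases) auto
  qed
qed


lemma step_lemma:
  fixes \<rho> :: "real measure" and a :: "nat \<Rightarrow> nat \<Rightarrow> real" and \<beta> :: "nat \<Rightarrow> real"
    and \<eta> :: real and M :: "nat \<Rightarrow> 'a measure" and D :: "nat \<Rightarrow> 'a \<Rightarrow> real measure"
  assumes A4: "\<And>N j. 1 \<le> j \<Longrightarrow> j < N \<Longrightarrow> a N j < a N (Suc j)"
    and A5: "0 < \<eta>" and eta1: "\<eta> \<le> 1"
    and A8: "\<And>N. 1 \<le> N \<Longrightarrow> 0 < \<beta> N"
    and A10: "\<And>N. 1 \<le> N \<Longrightarrow> dirichlet_process (M N) (D N) (real N * \<beta> N / 2) (empirical N (a N))"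
    and cc0: "(\<lambda>N. real N * \<beta> N / 2) \<longlonglongrightarrow> 0"
    and Hconv: "\<And>h. h \<in> H_eta \<eta> \<Longrightarrow> (\<lambda>N. integral\<^sup>L (empirical N (a N)) h) \<longlonglongrightarrow> integral\<^sup>L \<rho> h"
    and gn0: "(\<lambda>n::nat. integral\<^sup>L \<rho> (\<lambda>x. max 0 ((1 + \<bar>x\<bar>) powr \<eta> - (1 + real n) powr \<eta>))) \<longlonglongrightarrow> 0"
    and xy: "x < y"
  shows "(\<lambda>N. integral\<^sup>L (random_mean_law (M N) (D N)) (cts_step x y)) \<longlonglongrightarrow> integral\<^sup>L \<rho> (cts_step x y)"
proof -
  define \<phi> where "\<phi> = cts_step x y"
  define L where "L = max 1 (1 / (y - x))"
  have L1: "L \<ge> 1" by (simp add: L_def)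
  have \<phi>m[measurable]: "\<phi> \<in> borel_measurable borel" unfolding \<phi>_def cts_step_def by measurable
  have \<phi>1: "\<bar>\<phi> t\<bar> \<le> 1" for t unfolding \<phi>_def by (rule cts_step_bdd)
  have \<phi>L: "\<bar>\<phi> s - \<phi> t\<bar> \<le> L * \<bar>s - t\<bar>" for s t unfolding \<phi>_def L_def by (rule cts_step_lip[OF xy])
  have conv\<phi>: "(\<lambda>N. integral\<^sup>L (empirical N (a N)) \<phi>) \<longlonglongrightarrow> integral\<^sup>L \<rho> \<phi>"
  proof -
    have "(\<lambda>N. integral\<^sup>L (empirical N (a N)) (\<lambda>t. \<phi> t / (2 * L))) \<longlonglongrightarrow> integral\<^sup>L \<rho> (\<lambda>t. \<phi> t / (2 * L))"
      by (rule Hconv) (rule H_scale[OF \<phi>1 \<phi>L L1 A5 eta1])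
    then have "(\<lambda>N. integral\<^sup>L (empirical N (a N)) (\<lambda>t. \<phi> t / (2 * L)) * (2 * L)) \<longlonglongrightarrow> integral\<^sup>L \<rho> (\<lambda>t. \<phi> t / (2 * L)) * (2 * L)"
      by (rule tendsto_mult_right)
    then show ?thesis using L1 by simp
  qed
  obtain Kg where Kg: "Kg > 0" "\<And>s. 0 < s \<and> s \<le> 1 \<longrightarrow> Gamma (s + \<eta>) / Gamma s \<le> Kg * s"
    using gamma_ratio[OF A5] by blast
  define Ce where "Ce = Kg * (1/\<eta> + 1) / Gamma \<eta>"
  have Ce0: "Ce \<ge> 0" unfolding Ce_def using Kg A5 by simp
  define A where "A = 4 * L * Ce + 2"
  have A0: "A > 0" unfolding A_def using L1 Ce0 by (simp add: add_nonneg_pos)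
  show ?thesis unfolding \<phi>_def[symmetric]
  proof (rule tendsto_iff[THEN iffD2], intro allI impI)
    fix \<epsilon> :: real assume e: "\<epsilon> > 0"
    have "eventually (\<lambda>n. integral\<^sup>L \<rho> (\<lambda>x. max 0 ((1 + \<bar>x\<bar>) powr \<eta> - (1 + real n) powr \<eta>)) < \<epsilon> / (8 * A)) sequentially"
      using order_tendstoD(2)[OF gn0, of "\<epsilon> / (8 * A)"] e A0 by simp
    then obtain n :: nat where n: "integral\<^sup>L \<rho> (\<lambda>x. max 0 ((1 + \<bar>x\<bar>) powr \<eta> - (1 + real n) powr \<eta>)) < \<epsilon> / (8 * A)"
      by (auto simp: eventually_sequentially)
    define g where "g x = max 0 ((1 + \<bar>x\<bar>) powr \<eta> - (1 + real n) powr \<eta>)" for x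
    have gm[measurable]: "g \<in> borel_measurable borel" unfolding g_def by measurable
    define R where "R = 2 powr (1/\<eta>) * (1 + real n)"
    have R0: "R \<ge> 0" by (simp add: R_def)
    define \<delta> where "\<delta> = min 1 (\<epsilon> / (4 * (4 * L * R + 1)))"
    have \<delta>0: "\<delta> > 0" unfolding \<delta>_def using e L1 R0 by (simp add: add_nonneg_pos)
    have E1: "eventually (\<lambda>N. N \<ge> 2) sequentially" by (rule eventually_ge_at_top)
    have E2: "eventually (\<lambda>N. real N * \<beta> N / 2 < \<delta>) sequentially"
      using order_tendstoD(2)[OF cc0 \<delta>0] .
    have E3: "eventually (\<lambda>N. \<bar>integral\<^sup>L (empirical N (a N)) g - integral\<^sup>L \<rho> g\<bar> < \<epsilon> / (8 * A)) sequentially"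
    proof -
      have "(\<lambda>N. integral\<^sup>L (empirical N (a N)) g) \<longlonglongrightarrow> integral\<^sup>L \<rho> g"
        unfolding g_def by (rule Hconv) (rule H_tail[OF A5 eta1])
      then show ?thesis using e A0 by (subst (asm) tendsto_iff) (auto simp: dist_real_def)
    qed
    have E4: "eventually (\<lambda>N. \<bar>integral\<^sup>L (empirical N (a N)) \<phi> - integral\<^sup>L \<rho> \<phi>\<bar> < \<epsilon> / 4) sequentially"
      using tendsto_iff[THEN iffD1, rule_format, OF conv\<phi>, of "\<epsilon> / 4"] e by (simp add: dist_real_def)
    show "eventually (\<lambda>N. dist (integral\<^sup>L (random_mean_law (M N) (D N)) \<phi>) (integral\<^sup>L \<rho> \<phi>) < \<epsilon>) sequentially"
      using E1 E2 E3 E4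
    proof eventually_elim
      case (elim N)
      define c where "c = real N * \<beta> N / 2"
      have N1: "N \<ge> 1" using elim(1) by simp
      have cpos: "c > 0" using A8[OF N1] N1 by (simp add: c_def)
      have c\<delta>: "c < \<delta>" using elim(2) by (simp add: c_def)
      have c1: "c \<le> 1" using c\<delta> by (simp add: \<delta>_def)
      interpret Q: dpN N "a N" c "M N" "D N"
      proof unfold_locales
        show "2 \<le> N" by (rule elim(1))
        show "inj_on (a N) {1..N}" by (rule strict_chain[of N "a N"]) (rule A4)
        show "0 < c" by (rule cpos)
        show "dirichlet_process (M N) (D N) c (empirical N (a N))" using A10[OF N1] by (simp add: c_def)
      qed
      have Kg': "Gamma (s + \<eta>) / Gamma s \<le> Kg * s" if "0 < s" "s \<le> 1" for s using Kg(2) that by blast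
      define T where "T = (\<Sum>j\<in>{1..N}. if R < \<bar>a N j\<bar> then \<bar>a N j\<bar> powr \<eta> else 0) / N"
      define P where "P = (\<Sum>j\<in>{1..N}. if R < \<bar>a N j\<bar> then 1 else 0) / N"
      define G where "G = integral\<^sup>L (empirical N (a N)) g"
      have mb: "\<bar>integral\<^sup>L (M N) (\<lambda>\<omega>. \<phi> (\<integral>x. x \<partial>D N \<omega>)) - integral\<^sup>L (empirical N (a N)) \<phi>\<bar>
          \<le> 2 * L * Ce * T + 4 * L * R * c + 2 * P"
        using Q.main_bound[OF \<phi>m \<phi>1 \<phi>L L1 R0 A5 eta1 c1 Kg'] unfolding T_def P_def Ce_def .
      have mm: "(\<lambda>\<omega>. \<integral>x. x \<partial>D N \<omega>) \<in> borel_measurable (M N)"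
        by (rule measurable_compose[OF Q.Dm integral_measurable_subprob_algebra]) simp
      have lawI: "integral\<^sup>L (random_mean_law (M N) (D N)) \<phi> = integral\<^sup>L (M N) (\<lambda>\<omega>. \<phi> (\<integral>x. x \<partial>D N \<omega>))"
        unfolding random_mean_law_def by (rule integral_distr[OF mm \<phi>m])
      have GI: "G = (\<Sum>j\<in>{1..N}. g (a N j)) / N" unfolding G_def by (rule Q.emp_integral[OF gm])
      have g0: "g t \<ge> 0" for t by (simp add: g_def)
      have TG: "T \<le> 2 * G"
      proof -
        have "(\<Sum>j\<in>{1..N}. if R < \<bar>a N j\<bar> then \<bar>a N j\<bar> powr \<eta> else 0) \<le> (\<Sum>j\<in>{1..N}. 2 * g (a N j))"
        proof (rule sum_mono)
          fix j
          show "(if R < \<bar>a N j\<bar> then \<bar>a N j\<bar> powr \<eta> else 0) \<le> 2 * g (a N j)"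
            using tail_bound(1)[OF A5 eta1, of "real n" "a N j"] g0[of "a N j"]
            by (auto simp: R_def g_def)
        qed
        then show ?thesis unfolding T_def GI using elim(1)
          by (simp add: sum_distrib_left[symmetric] divide_right_mono)
      qed
      have PG: "P \<le> G"
      proof -
        have "(\<Sum>j\<in>{1..N}. if R < \<bar>a N j\<bar> then 1 else 0) \<le> (\<Sum>j\<in>{1..N}. g (a N j))"
        proof (rule sum_mono)
          fix j
          show "(if R < \<bar>a N j\<bar> then 1 else 0) \<le> g (a N j)"
            using tail_bound(2)[OF A5 eta1, of "real n" "a N j"] g0[of "a N j"]
            by (auto simp: R_def g_def)
        qed
        then show ?thesis unfolding P_def GI using elim(1) by (simp add: divide_right_mono)
      qed
      have Gl: "G < \<epsilon> / (4 * A)"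
      proof -
        have "G < integral\<^sup>L \<rho> g + \<epsilon> / (8 * A)" using elim(3) by (simp add: G_def)
        also have "g = (\<lambda>x. max 0 ((1 + \<bar>x\<bar>) powr \<eta> - (1 + real n) powr \<eta>))" by (rule ext) (simp add: g_def)
        then have "integral\<^sup>L \<rho> g < \<epsilon> / (8 * A)" using n by simp
        finally show ?thesis by simp
      qed
      have AG: "A * G < \<epsilon> / 4"
      proof -
        have "A * G < A * (\<epsilon> / (4 * A))" using Gl A0 by (intro mult_strict_left_mono) auto
        then show ?thesis using A0 by simp
      qed
      have cR: "4 * L * R * c < \<epsilon> / 4"
      proof -
        have "4 * L * R * c \<le> (4 * L * R + 1) * c" using cpos by (simp add: algebra_simps)
        also have "\<dots> < (4 * L * R + 1) * \<delta>" using c\<delta> L1 R0 by (intro mult_strict_left_mono) (auto simp: add_nonneg_pos)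
        also have "\<delta> \<le> \<epsilon> / (4 * (4 * L * R + 1))" by (simp add: \<delta>_def)
        then have "(4 * L * R + 1) * \<delta> \<le> (4 * L * R + 1) * (\<epsilon> / (4 * (4 * L * R + 1)))"
          using L1 R0 by (intro mult_left_mono) auto
        also have "\<dots> = \<epsilon> / 4"
        proof -
          have "4 * L * R + 1 \<noteq> 0" using L1 R0 by (smt (verit) mult_nonneg_nonneg)
          then show ?thesis by (simp add: field_simps)
        qed
        finally show ?thesis by simp
      qed
      have TT: "2 * L * Ce * T \<le> 2 * L * Ce * (2 * G)"
        using TG L1 Ce0 by (intro mult_left_mono) auto
      have "2 * L * Ce * T + 4 * L * R * c + 2 * P \<le> A * G + 4 * L * R * c"
        using TT PG unfolding A_def by (simp add: algebra_simps)
      then have "\<bar>integral\<^sup>L (random_mean_law (M N) (D N)) \<phi> - integral\<^sup>L (empirical N (a N)) \<phi>\<bar> < \<epsilon> / 2"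
        using mb lawI AG cR by linarith
      then show ?case using elim(4) unfolding dist_real_def
        using abs_triangle_ineq[of "integral\<^sup>L (random_mean_law (M N) (D N)) \<phi> - integral\<^sup>L (empirical N (a N)) \<phi>"
              "integral\<^sup>L (empirical N (a N)) \<phi> - integral\<^sup>L \<rho> \<phi>"] by linarith
    qed
  qed
qed


theorem proposition3p7:
  fixes \<rho> :: "real measure" and a :: "nat \<Rightarrow> nat \<Rightarrow> real" and \<beta> :: "nat \<Rightarrow> real"
    and \<eta> :: real and M :: "nat \<Rightarrow> 'a measure" and D :: "nat \<Rightarrow> 'a \<Rightarrow> real measure"
  assumes "prob_space \<rho>" and "sets \<rho> = sets borel"
    and "(\<integral>\<^sup>+x. ennreal (ln (1 + x\<^sup>2)) \<partial>\<rho>) < \<infinity>"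
    and "\<And>N j. 1 \<le> j \<Longrightarrow> j < N \<Longrightarrow> a N j < a N (Suc j)"
    and "0 < \<eta>" and "\<eta> < 1"
    and "(\<lambda>N. dW \<eta> (empirical N (a N)) \<rho>) \<longlonglongrightarrow> 0"
    and "\<And>N. 1 \<le> N \<Longrightarrow> 0 < \<beta> N"
    and "(\<lambda>N. real N * \<beta> N) \<longlonglongrightarrow> 0"
    and "\<And>N. 1 \<le> N \<Longrightarrow> dirichlet_process (M N) (D N) (real N * \<beta> N / 2) (empirical N (a N))"
  shows "weak_conv_m (\<lambda>N. random_mean_law (M N) (D N)) \<rho>"
proof -
  note A1 = assms(1) and A2 = assms(2) and A4 = assms(4) and A5 = assms(5) and A6 = assms(6)
    and A7 = assms(7) and A8 = assms(8) and A9 = assms(9) and A10 = assms(10)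
  have eta1: "\<eta> \<le> 1" using A6 by simp
  define law where "law N = random_mean_law (M N) (D N)" for N
  define cc where "cc N = real N * \<beta> N / 2" for N
  have cc0: "cc \<longlonglongrightarrow> 0"
    unfolding cc_def using tendsto_divide[OF A9 tendsto_const[of 2]] by simp
  have mean_meas: "(\<lambda>\<omega>. \<integral>x. x \<partial>D N \<omega>) \<in> borel_measurable (M N)" if N: "N \<ge> 1" for N
  proof -
    have "D N \<in> measurable (M N) (subprob_algebra borel)" using A10[OF N] by (simp add: dirichlet_process_def)
    then show ?thesis by (rule measurable_compose[OF _ integral_measurable_subprob_algebra]) simp
  qed
  have rd: "real_distribution (law N)" if N: "N \<ge> 1" for N
  proof -
    have "prob_space (M N)" using A10[OF N] by (simp add: dirichlet_process_def)
    then have "prob_space (law N)"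
      unfolding law_def random_mean_law_def by (rule prob_space.prob_space_distr) (rule mean_meas[OF N])
    then show ?thesis by (simp add: real_distribution_def real_distribution_axioms_def law_def random_mean_law_def)
  qed
  have rdr: "real_distribution \<rho>"
    using A1 A2 by (simp add: real_distribution_def real_distribution_axioms_def)
  have Hconv: "(\<lambda>N. integral\<^sup>L (empirical N (a N)) h) \<longlonglongrightarrow> integral\<^sup>L \<rho> h" if h: "h \<in> H_eta \<eta>" for h
  proof (rule tendsto_iff[THEN iffD2], intro allI impI)
    fix \<epsilon> :: real assume e: "\<epsilon> > 0"
    have "eventually (\<lambda>N. dW \<eta> (empirical N (a N)) \<rho> < ereal \<epsilon>) sequentially"
      using order_tendstoD(2)[OF A7, of "ereal \<epsilon>"] e by (simp add: zero_ereal_def)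
    then show "eventually (\<lambda>N. dist (integral\<^sup>L (empirical N (a N)) h) (integral\<^sup>L \<rho> h) < \<epsilon>) sequentially"
      by (rule eventually_mono) (use dW_close(3)[OF _ h] in \<open>auto simp: dist_real_def\<close>)
  qed
  have int1: "integrable \<rho> (\<lambda>x. (1 + \<bar>x\<bar>) powr \<eta>)"
  proof -
    have "eventually (\<lambda>N. dW \<eta> (empirical N (a N)) \<rho> < ereal 1) sequentially"
      using order_tendstoD(2)[OF A7, of "ereal 1"] by (simp add: zero_ereal_def)
    then obtain N where "dW \<eta> (empirical N (a N)) \<rho> < ereal 1"
      by (auto simp: eventually_sequentially)
    then show ?thesis using dW_close(2) H_one[OF A5 eta1] by blast
  qed
  define gg where "gg K x = max 0 ((1 + \<bar>x\<bar>) powr \<eta> - (1 + K) powr \<eta>)" for K x :: real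
  have gg_meas[measurable]: "gg K \<in> borel_measurable borel" for K unfolding gg_def by measurable
  have ggH: "gg K \<in> H_eta \<eta>" for K unfolding gg_def by (rule H_tail[OF A5 eta1])
  have gn0: "(\<lambda>n::nat. integral\<^sup>L \<rho> (gg (real n))) \<longlonglongrightarrow> 0"
  proof -
    have "(\<lambda>n::nat. integral\<^sup>L \<rho> (gg (real n))) \<longlonglongrightarrow> integral\<^sup>L \<rho> (\<lambda>x. 0::real)"
    proof (rule integral_dominated_convergence[where w="\<lambda>x. (1 + \<bar>x\<bar>) powr \<eta>"])
      show "(\<lambda>x. 0::real) \<in> borel_measurable \<rho>" by simp
      show "gg (real n) \<in> borel_measurable \<rho>" for n
        by (subst measurable_cong_sets[OF A2 refl]) (rule gg_meas)
      show "integrable \<rho> (\<lambda>x. (1 + \<bar>x\<bar>) powr \<eta>)" by (rule int1)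
      show "AE x in \<rho>. (\<lambda>n. gg (real n) x) \<longlonglongrightarrow> 0"
      proof (intro AE_I2 tendsto_eventually)
        fix x :: real
        show "eventually (\<lambda>n. gg (real n) x = 0) sequentially"
          unfolding eventually_sequentially
        proof (intro exI[of _ "nat \<lceil>\<bar>x\<bar>\<rceil>"] allI impI)
          fix n assume "nat \<lceil>\<bar>x\<bar>\<rceil> \<le> n"
          then have "\<bar>x\<bar> \<le> real n" by linarith
          then have "(1 + \<bar>x\<bar>) powr \<eta> \<le> (1 + real n) powr \<eta>" using A5 by (intro powr_mono2) auto
          then show "gg (real n) x = 0" by (simp add: gg_def)
        qed
      qed
      show "AE x in \<rho>. norm (gg (real n) x) \<le> (1 + \<bar>x\<bar>) powr \<eta>" for n
      proof (intro AE_I2)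
        fix x
        have c0: "0 \<le> (1 + real n) powr \<eta>" by simp
        have u0: "0 \<le> (1 + \<bar>x\<bar>) powr \<eta>" by simp
        have "gg (real n) x \<ge> 0" "gg (real n) x \<le> (1 + \<bar>x\<bar>) powr \<eta>"
          unfolding gg_def using c0 u0 by (auto simp: max_def)
        then show "norm (gg (real n) x) \<le> (1 + \<bar>x\<bar>) powr \<eta>" by simp
      qed
    qed
    then show ?thesis by simp
  qed
  have step: "(\<lambda>N. integral\<^sup>L (law N) (cts_step x y)) \<longlonglongrightarrow> integral\<^sup>L \<rho> (cts_step x y)" if xy: "x < y" for x y
  proof -
    have cc0': "(\<lambda>N. real N * \<beta> N / 2) \<longlonglongrightarrow> 0" using cc0 by (simp add: cc_def[abs_def])
    have gg_eq: "gg (real n) = (\<lambda>x. max 0 ((1 + \<bar>x\<bar>) powr \<eta> - (1 + real n) powr \<eta>))" for n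
      by (rule ext) (simp add: gg_def)
    have gn0': "(\<lambda>n::nat. integral\<^sup>L \<rho> (\<lambda>x. max 0 ((1 + \<bar>x\<bar>) powr \<eta> - (1 + real n) powr \<eta>))) \<longlonglongrightarrow> 0"
      using gn0 by (simp add: gg_eq)
    show ?thesis unfolding law_def
      by (rule step_lemma[OF A4 A5 eta1 A8 A10 cc0' Hconv gn0' xy])
  qed
  have wc: "weak_conv_m (\<lambda>n. law (Suc n)) \<rho>"
  proof (rule integral_cts_step_conv_imp_weak_conv)
    show "real_distribution (law (Suc n))" for n by (rule rd) simp
    show "real_distribution \<rho>" by (rule rdr)
    show "(\<lambda>n. integral\<^sup>L (law (Suc n)) (cts_step x y)) \<longlonglongrightarrow> integral\<^sup>L \<rho> (cts_step x y)" if "x < y" for x y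
      using step[OF that] by (rule LIMSEQ_Suc)
  qed
  show ?thesis unfolding weak_conv_m_def weak_conv_def
  proof (intro allI impI)
    fix t assume "isCont (cdf \<rho>) t"
    then have "(\<lambda>n. cdf (law (Suc n)) t) \<longlonglongrightarrow> cdf \<rho> t" using wc unfolding weak_conv_m_def weak_conv_def by blast
    then have "(\<lambda>n. cdf (law n) t) \<longlonglongrightarrow> cdf \<rho> t" by (rule LIMSEQ_imp_Suc)
    then show "(\<lambda>n. cdf (random_mean_law (M n) (D n)) t) \<longlonglongrightarrow> cdf \<rho> t" unfolding law_def .
  qed
qed


end
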